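(* Let $F$ be a nontrivial finite group, $\tfrac12<p<1$, $\lambda=\frac{p}{1-p}$, and let $R_n=((L_n(i))_i,S_n)$ be the stationary random walk on $F\wr\mathbb{Z}$ with parameter $p$. Let $\rho_0=0$, $\rho_k=\inf\{n>\rho_{k-1}:S_n=0\}$, and $N_k^+=|\{1\le j\le k: S_{\rho_{j-1}+1}>0\}|$. Then for every $k\ge1$ and $0\le m\le k$, \[\Pr(R_{\rho_k}=\mathrm{id}\mid N_k^+=m)=\frac{(|F|-1)^2}{|F|}\left(\sum_{a=1}^{\infty}|F|^{-a}\Big(1-\frac{\lambda-1}{\lambda^a-1}\Big)^m\right)\left(\sum_{b=1}^{\infty}|F|^{-b}\Big(1-\frac{\lambda-1}{\lambda^b-1}\Big)^{k-m}\right).\]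
   Context: Elements of $F\wr\mathbb{Z}$ are pairs $((L(i))_{i\in\mathbb{Z}},x)$ with $L:\mathbb{Z}\to F$ finitely supported and $x\in\mathbb{Z}$; $\mathrm{id}$ has all lamps $\mathrm{id}_F$ and $x=0$. $(S_n)$ is the Markov chain on $\mathbb{Z}$ with $S_0=0$ and $\Pr(S_{n+1}=x+1\mid S_n=x)$ equal to $p,\tfrac12,1-p$ for $x<0,x=0,x>0$ respectively, and $\Pr(S_{n+1}=x-1\mid S_n=x)$ equal to $1-p,\tfrac12,p$ respectively. $(U_n,V_n)_{n\ge1}$ are i.i.d. pairs of independent uniform elements of $F$, independent of $(S_n)$; $L_0\equiv\mathrm{id}_F$, $L_{n+1}(i)=L_n(i)$ for $i\notin\{S_n,S_{n+1}\}$, $L_{n+1}(S_n)=U_{n+1}$, $L_{n+1}(S_{n+1})=V_{n+1}$. Convention $0^0=1$. *)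

theory Defs
  imports "HOL-Probability.Probability"
begin

text \<open>Lamplighter group F wr Z: elements are pairs (L, x) with L :: int => 'f finitely
  supported and x :: int.  The finite group F is modelled by a type 'f of class
  group_add (not necessarily commutative); its identity element is 0.\<close>

definition step_pmf :: "real \<Rightarrow> ((bool \<times> bool) \<times> ('f::finite \<times> 'f)) pmf" where
  "step_pmf p = pair_pmf (pair_pmf (bernoulli_pmf p) (bernoulli_pmf (1/2)))
                         (pair_pmf (pmf_of_set UNIV) (pmf_of_set UNIV))"

definition walk_step :: "int \<Rightarrow> bool \<times> bool \<Rightarrow> int" where
  "walk_step x c =
     (if x < 0 then (if fst c then x + 1 else x - 1)
      else if x = 0 then (if snd c then x + 1 else x - 1)
      else (if fst c then x - 1 else x + 1))"

text \<open>The underlying probability space: i.i.d. innovations; the n-th entry of the stream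
  drives step n -> n+1.\<close>
definition lamp_space :: "real \<Rightarrow> ((bool \<times> bool) \<times> ('f::finite \<times> 'f)) stream measure" where
  "lamp_space p = stream_space (measure_pmf (step_pmf p))"

fun lpos :: "((bool \<times> bool) \<times> ('f \<times> 'f)) stream \<Rightarrow> nat \<Rightarrow> int" where
  "lpos \<omega> 0 = 0"
| "lpos \<omega> (Suc n) = walk_step (lpos \<omega> n) (fst (\<omega> !! n))"

fun lamps :: "((bool \<times> bool) \<times> ('f::group_add \<times> 'f)) stream \<Rightarrow> nat \<Rightarrow> int \<Rightarrow> 'f" where
  "lamps \<omega> 0 = (\<lambda>i. 0)"
| "lamps \<omega> (Suc n) =
     ((lamps \<omega> n)(lpos \<omega> n := fst (snd (\<omega> !! n))))
        (lpos \<omega> (Suc n) := snd (snd (\<omega> !! n)))"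

definition lstate :: "((bool \<times> bool) \<times> ('f::group_add \<times> 'f)) stream \<Rightarrow> nat \<Rightarrow> (int \<Rightarrow> 'f) \<times> int" where
  "lstate \<omega> n = (lamps \<omega> n, lpos \<omega> n)"

text \<open>Return times: rho_0 = 0, rho_{k+1} = inf {n > rho_k. S_n = 0}
  (these are almost surely finite since the walk is recurrent).\<close>
fun rho :: "((bool \<times> bool) \<times> ('f \<times> 'f)) stream \<Rightarrow> nat \<Rightarrow> nat" where
  "rho \<omega> 0 = 0"
| "rho \<omega> (Suc k) = (LEAST n. rho \<omega> k < n \<and> lpos \<omega> n = 0)"

definition Nplus :: "((bool \<times> bool) \<times> ('f \<times> 'f)) stream \<Rightarrow> nat \<Rightarrow> nat" where
  "Nplus \<omega> k = card {j \<in> {1..k}. lpos \<omega> (rho \<omega> (j - 1) + 1) > 0}"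

end

theory Submission
  imports Defs
begin

type_synonym 'f inn = "(bool \<times> bool) \<times> ('f \<times> 'f)"
type_synonym wst = "int \<times> nat \<times> nat"

definition wnext :: "wst \<Rightarrow> 'f inn \<Rightarrow> wst" where
  "wnext w t = (case w of (x, j, c) \<Rightarrow>
     if j = 0 then (x, j, c) else
     (let x' = walk_step x (fst t) in (x', if x' = 0 then j - 1 else j, if x = 0 \<and> 0 < x' then Suc c else c)))"

definition lnext :: "(int \<Rightarrow> 'f) \<times> wst \<Rightarrow> 'f inn \<Rightarrow> (int \<Rightarrow> 'f) \<times> wst" where
  "lnext s t = (case s of (L, w) \<Rightarrow>
     if fst (snd w) = 0 then (L, w) else
     ((L(fst w := fst (snd t)))(fst (wnext w t) := snd (snd t)), wnext w t))"

definition runW :: "wst \<Rightarrow> 'f inn list \<Rightarrow> wst" where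
  "runW w xs = foldl wnext w xs"

definition runL :: "(int \<Rightarrow> 'f) \<times> wst \<Rightarrow> 'f inn list \<Rightarrow> (int \<Rightarrow> 'f) \<times> wst" where
  "runL s xs = foldl lnext s xs"

fun vis :: "wst \<Rightarrow> 'f inn list \<Rightarrow> int set" where
  "vis w [] = {fst w}"
| "vis w (t # xs) = (if fst (snd w) = 0 then {fst w} else insert (fst w) (vis (wnext w t) xs))"

lemma runW_Nil[simp]: "runW w [] = w" by (simp add: runW_def)
lemma runW_Cons[simp]: "runW w (t # xs) = runW (wnext w t) xs" by (simp add: runW_def)
lemma runW_append: "runW w (xs @ ys) = runW (runW w xs) ys" by (simp add: runW_def)
lemma runL_Nil[simp]: "runL w [] = w" by (simp add: runL_def)
lemma runL_Cons[simp]: "runL w (t # xs) = runL (lnext w t) xs" by (simp add: runL_def)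
lemma runL_append: "runL w (xs @ ys) = runL (runL w xs) ys" by (simp add: runL_def)

lemma wnext_done[simp]: "fst (snd w) = 0 \<Longrightarrow> wnext w t = w"
  by (cases w) (simp add: wnext_def)
lemma lnext_done[simp]: "fst (snd (snd s)) = 0 \<Longrightarrow> lnext s t = s"
  by (cases s) (simp add: lnext_def)

lemma runW_done: "fst (snd w) = 0 \<Longrightarrow> runW w xs = w"
  by (induction xs) auto
lemma runL_done: "fst (snd (snd s)) = 0 \<Longrightarrow> runL s xs = s"
  by (induction xs) auto

lemma snd_lnext: "snd (lnext s t) = wnext (snd s) t"
  by (cases s) (auto simp: lnext_def)
lemma snd_runL: "snd (runL s xs) = runW (snd s) xs"
  by (induction xs arbitrary: s) (auto simp: snd_lnext)

lemma vis_done: "fst (snd w) = 0 \<Longrightarrow> vis w xs = {fst w}"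
  by (cases xs) auto

lemma walk_step_diff: "\<bar>walk_step x c - x\<bar> = 1"
  by (auto simp: walk_step_def)

lemma wnext_pos: "fst (snd w) \<noteq> 0 \<Longrightarrow> fst (wnext w t) = walk_step (fst w) (fst t)"
  by (cases w) (auto simp: wnext_def Let_def)

lemma vis_interval: "\<exists>l h. vis w xs = {l..h} \<and> l \<le> fst w \<and> fst w \<le> h"
proof (induction xs arbitrary: w)
  case Nil then show ?case by (intro exI[of _ "fst w"]) auto
next
  case (Cons t xs)
  show ?case
  proof (cases "fst (snd w) = 0")
    case True then show ?thesis by (intro exI[of _ "fst w"]) auto
  next
    case False
    obtain l h where lh: "vis (wnext w t) xs = {l..h}" "l \<le> fst (wnext w t)" "fst (wnext w t) \<le> h"
      using Cons by blast
    have d: "\<bar>fst (wnext w t) - fst w\<bar> = 1" using False by (simp add: wnext_pos walk_step_diff)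
    have "insert (fst w) {l..h} = {min l (fst w)..max h (fst w)}"
      using lh d by (auto simp: abs_if split: if_splits)
    then show ?thesis using False lh
      by (intro exI[of _ "min l (fst w)"] exI[of _ "max h (fst w)"]) auto
  qed
qed

lemma vis_finite: "finite (vis w xs)"
  using vis_interval[of w xs] by auto

lemma pos_in_vis: "fst w \<in> vis w xs"
  by (cases xs) auto

lemma Nplus_Suc: "Nplus \<omega> (Suc i) = Nplus \<omega> i + (if 0 < lpos \<omega> (rho \<omega> i + 1) then 1 else 0)"
proof -
  have e: "{j \<in> {1..Suc i}. 0 < lpos \<omega> (rho \<omega> (j - 1) + 1)} =
      (if 0 < lpos \<omega> (rho \<omega> i + 1) then insert (Suc i) else id) {j \<in> {1..i}. 0 < lpos \<omega> (rho \<omega> (j - 1) + 1)}"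
    by (auto simp: atLeastAtMostSuc_conv)
  show ?thesis unfolding Nplus_def e by auto
qed

lemma stake_Suc_run: "runW w (stake (Suc n) \<omega>) = wnext (runW w (stake n \<omega>)) (\<omega> !! n)"
  unfolding stake_Suc runW_append by simp
lemma stake_Suc_runL: "runL w (stake (Suc n) \<omega>) = lnext (runL w (stake n \<omega>)) (\<omega> !! n)"
  unfolding stake_Suc runL_append by simp

lemma invariant:
  fixes \<omega> :: "'f::group_add inn stream" and k n :: nat
  defines "st \<equiv> \<lambda>n. runW (0, k, 0) (stake n \<omega>)"
  defines "sl \<equiv> \<lambda>n. runL ((\<lambda>i. 0), (0, k, 0)) (stake n \<omega>)"
  assumes "\<forall>t<n. 0 < fst (snd (st t))"
  shows "fst (st n) = lpos \<omega> n \<and> fst (sl n) = lamps \<omega> n \<and> snd (sl n) = st n \<and> fst (snd (st n)) \<le> k \<and>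
    rho \<omega> (k - fst (snd (st n))) \<le> n \<and> lpos \<omega> (rho \<omega> (k - fst (snd (st n)))) = 0 \<and>
    (\<forall>t. rho \<omega> (k - fst (snd (st n))) < t \<and> t \<le> n \<longrightarrow> lpos \<omega> t \<noteq> 0) \<and>
    snd (snd (st n)) = Nplus \<omega> (k - fst (snd (st n))) +
       (if rho \<omega> (k - fst (snd (st n))) < n \<and> 0 < lpos \<omega> (rho \<omega> (k - fst (snd (st n))) + 1) then 1 else 0)"
  using assms(3)
proof (induction n)
  case 0
  show ?case by (auto simp: st_def sl_def Nplus_def lstate_def)
next
  case (Suc n)
  have IH: "fst (st n) = lpos \<omega> n \<and> fst (sl n) = lamps \<omega> n \<and> snd (sl n) = st n \<and> fst (snd (st n)) \<le> k \<and>
    rho \<omega> (k - fst (snd (st n))) \<le> n \<and> lpos \<omega> (rho \<omega> (k - fst (snd (st n)))) = 0 \<and>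
    (\<forall>t. rho \<omega> (k - fst (snd (st n))) < t \<and> t \<le> n \<longrightarrow> lpos \<omega> t \<noteq> 0) \<and>
    snd (snd (st n)) = Nplus \<omega> (k - fst (snd (st n))) +
       (if rho \<omega> (k - fst (snd (st n))) < n \<and> 0 < lpos \<omega> (rho \<omega> (k - fst (snd (st n))) + 1) then 1 else 0)"
    using Suc by auto
  obtain x j c where w: "st n = (x, j, c)" by (cases "st n") auto
  have jpos: "0 < j" using Suc.prems w by (metis fst_conv lessI snd_conv)
  define i where "i = k - j"
  have x: "x = lpos \<omega> n" using IH w by simp
  have L: "fst (sl n) = lamps \<omega> n" "snd (sl n) = (x, j, c)" using IH w by auto
  have jk: "j \<le> k" using IH w by simp
  have r1: "rho \<omega> i \<le> n" "lpos \<omega> (rho \<omega> i) = 0" "\<forall>t. rho \<omega> i < t \<and> t \<le> n \<longrightarrow> lpos \<omega> t \<noteq> 0"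
    using IH w by (auto simp: i_def)
  have cc: "c = Nplus \<omega> i + (if rho \<omega> i < n \<and> 0 < lpos \<omega> (rho \<omega> i + 1) then 1 else 0)"
    using IH w by (simp add: i_def)
  define x' where "x' = lpos \<omega> (Suc n)"
  have x': "walk_step x (fst (\<omega> !! n)) = x'" by (simp add: x'_def x)
  have stS: "st (Suc n) = (x', if x' = 0 then j - 1 else j, if x = 0 \<and> 0 < x' then Suc c else c)"
    unfolding st_def using stake_Suc_run[of "(0,k,0)" n \<omega>] w jpos x'
    by (simp add: st_def wnext_def Let_def)
  have slS: "sl (Suc n) = ((lamps \<omega> n)(x := fst (snd (\<omega> !! n)), x' := snd (snd (\<omega> !! n))), st (Suc n))"
  proof -
    obtain LL where s: "sl n = (LL, (x, j, c))" using L by (cases "sl n") auto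
    have "sl (Suc n) = lnext (sl n) (\<omega> !! n)" unfolding sl_def by (rule stake_Suc_runL)
    also have "\<dots> = ((lamps \<omega> n)(x := fst (snd (\<omega> !! n)), x' := snd (snd (\<omega> !! n))), wnext (x, j, c) (\<omega> !! n))"
      using s L jpos x' by (auto simp: lnext_def wnext_def Let_def)
    also have "wnext (x, j, c) (\<omega> !! n) = st (Suc n)"
      using stS jpos x' by (simp add: wnext_def Let_def)
    finally show ?thesis .
  qed
  have lampsS: "lamps \<omega> (Suc n) = (lamps \<omega> n)(x := fst (snd (\<omega> !! n)), x' := snd (snd (\<omega> !! n)))"
    by (simp add: x x'_def)
  show ?case
  proof (cases "x' = 0")
    case True
    have jj: "k - (j - 1) = Suc i" using jpos jk by (simp add: i_def)
    have rS: "rho \<omega> (Suc i) = Suc n"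
      unfolding rho.simps
    proof (rule Least_equality)
      show "rho \<omega> i < Suc n \<and> lpos \<omega> (Suc n) = 0" using r1 True x'_def by auto
      show "\<And>y. rho \<omega> i < y \<and> lpos \<omega> y = 0 \<Longrightarrow> Suc n \<le> y"
        using r1 by (meson not_less_eq_eq)
    qed
    have "c = Nplus \<omega> (Suc i)"
    proof (cases "rho \<omega> i < n")
      case True
      then show ?thesis using cc by (simp add: Nplus_Suc)
    next
      case False
      then have "rho \<omega> i = n" using r1 by simp
      then show ?thesis using cc \<open>x' = 0\<close> by (simp add: Nplus_Suc x'_def)
    qed
    then show ?thesis using stS slS lampsS True jj rS jk x'_def by simp
  next
    case False
    have xz: "x = 0 \<longleftrightarrow> rho \<omega> i = n" using r1 x by (metis le_neq_implies_less order_refl)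
    have "(if x = 0 \<and> 0 < x' then Suc c else c) =
          Nplus \<omega> i + (if rho \<omega> i < Suc n \<and> 0 < lpos \<omega> (rho \<omega> i + 1) then 1 else 0)"
    proof (cases "rho \<omega> i = n")
      case True
      then show ?thesis using cc xz by (simp add: x'_def)
    next
      case False
      then have "rho \<omega> i < n" using r1 by simp
      then show ?thesis using cc xz False by simp
    qed
    moreover have "\<forall>t. rho \<omega> i < t \<and> t \<le> Suc n \<longrightarrow> lpos \<omega> t \<noteq> 0"
      using r1 False x'_def le_Suc_eq by auto
    ultimately show ?thesis using stS slS lampsS False jk r1 x'_def by (simp add: i_def)
  qed
qed

lemma wnext_inv: "(fst (snd w) = 0 \<longrightarrow> fst w = 0) \<Longrightarrow> (fst (snd (wnext w t)) = 0 \<longrightarrow> fst (wnext w t) = 0)"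
  by (cases w) (auto simp: wnext_def Let_def)

lemma runW_inv: "(fst (snd w) = 0 \<longrightarrow> fst w = 0) \<Longrightarrow> (fst (snd (runW w xs)) = 0 \<longrightarrow> fst (runW w xs) = 0)"
  by (induction xs arbitrary: w) (simp, metis runW_Cons wnext_inv)

lemma connect:
  fixes \<omega> :: "'f::group_add inn stream" and k n :: nat
  assumes d: "fst (snd (runW (0, k, 0) (stake n \<omega>))) = 0"
  shows "lstate \<omega> (rho \<omega> k) = (fst (runL ((\<lambda>i. 0), (0, k, 0)) (stake n \<omega>)), 0)
       \<and> Nplus \<omega> k = snd (snd (runW (0, k, 0) (stake n \<omega>)))"
proof -
  define st where "st = (\<lambda>n. runW (0, k, 0) (stake n \<omega>))"
  define sl where "sl = (\<lambda>n. runL ((\<lambda>i. 0), (0::int, k, 0::nat)) (stake n \<omega>))"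
  define \<tau> where "\<tau> = (LEAST t. fst (snd (st t)) = 0)"
  have t1: "fst (snd (st \<tau>)) = 0" unfolding \<tau>_def by (rule LeastI[of _ n]) (use d st_def in simp)
  have t2: "\<tau> \<le> n" unfolding \<tau>_def by (rule Least_le) (use d st_def in simp)
  have t3: "\<forall>t<\<tau>. 0 < fst (snd (st t))" unfolding \<tau>_def using not_less_Least by blast
  have I: "fst (st \<tau>) = lpos \<omega> \<tau> \<and> fst (sl \<tau>) = lamps \<omega> \<tau> \<and> snd (sl \<tau>) = st \<tau> \<and> fst (snd (st \<tau>)) \<le> k \<and>
    rho \<omega> (k - fst (snd (st \<tau>))) \<le> \<tau> \<and> lpos \<omega> (rho \<omega> (k - fst (snd (st \<tau>)))) = 0 \<and>
    (\<forall>t. rho \<omega> (k - fst (snd (st \<tau>))) < t \<and> t \<le> \<tau> \<longrightarrow> lpos \<omega> t \<noteq> 0) \<and>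
    snd (snd (st \<tau>)) = Nplus \<omega> (k - fst (snd (st \<tau>))) +
       (if rho \<omega> (k - fst (snd (st \<tau>))) < \<tau> \<and> 0 < lpos \<omega> (rho \<omega> (k - fst (snd (st \<tau>))) + 1) then 1 else 0)"
    using invariant[where \<omega>=\<omega> and k=k and n=\<tau>] t3 unfolding st_def sl_def by blast
  have p0: "fst (st \<tau>) = 0" using runW_inv[of "(0,k,0)" "stake \<tau> \<omega>"] t1 unfolding st_def by simp
  have rk: "rho \<omega> k = \<tau>"
  proof -
    have "rho \<omega> k \<le> \<tau>" using I t1 by simp
    moreover have "\<not> rho \<omega> k < \<tau>" using I t1 p0 by force
    ultimately show ?thesis by simp
  qed
  have abs: "sl n = sl \<tau>"
  proof -
    have e: "stake n \<omega> = stake \<tau> \<omega> @ stake (n - \<tau>) (sdrop \<tau> \<omega>)" using t2 by simp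
    show ?thesis unfolding sl_def e runL_append
      by (rule runL_done) (use I t1 in \<open>simp add: sl_def\<close>)
  qed
  have "st n = snd (sl n)" unfolding st_def sl_def by (simp add: snd_runL)
  then have stn: "st n = st \<tau>" using abs I by simp
  have "fst (sl n) = lamps \<omega> \<tau>" "snd (snd (st n)) = Nplus \<omega> k" using I abs stn t1 rk by simp_all
  then show ?thesis using I rk t1 p0 unfolding sl_def st_def
    by (simp add: lstate_def)
qed

lemma sets_lamp_space: "sets (lamp_space p :: 'f::finite inn stream measure) = sets (stream_space (count_space UNIV))"
  unfolding lamp_space_def by (rule sets_stream_space_cong) simp

lemma space_lamp_space: "space (lamp_space p) = UNIV"
  unfolding lamp_space_def by (simp add: space_stream_space)

lemma prob_space_lamp: "prob_space (lamp_space p)"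
  unfolding lamp_space_def by (rule prob_space.prob_space_stream_space) (rule prob_space_measure_pmf)

lemma meas_stake: "(\<lambda>\<omega>. g (stake n \<omega>)) \<in> measurable (lamp_space p :: 'f::finite inn stream measure) N"
  if "\<And>x. g x \<in> space N"
proof -
  have "stake n \<in> measurable (lamp_space p :: 'f::finite inn stream measure) (count_space UNIV)"
    using measurable_stake by (subst measurable_cong_sets[OF sets_lamp_space refl]) 
  then show ?thesis by (rule measurable_compose) (simp add: that)
qed

lemma sets_ex_stake: "{\<omega>. \<exists>n. Q n (stake n \<omega>)} \<in> sets (lamp_space p :: 'f::finite inn stream measure)"
proof -
  have "{\<omega>. \<exists>n. Q n (stake n \<omega>)} = (\<Union>n. {\<omega>\<in>space (lamp_space p :: 'f::finite inn stream measure). Q n (stake n \<omega>)})"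
    by (auto simp: space_lamp_space)
  also have "\<dots> \<in> sets (lamp_space p)"
  proof -
    have "\<And>n. {\<omega>\<in>space (lamp_space p :: 'f::finite inn stream measure). Q n (stake n \<omega>)} \<in> sets (lamp_space p)"
      by (rule predE, rule meas_stake) simp
    then show ?thesis by (intro sets.countable_UN) auto
  qed
  finally show ?thesis .
qed

lemma sets_stake: "{\<omega>. Q (stake n \<omega>)} \<in> sets (lamp_space p :: 'f::finite inn stream measure)"
  using sets_ex_stake[of "\<lambda>m xs. m = n \<and> Q xs" p] by simp

lemma pmf_step: "0 \<le> p \<Longrightarrow> p \<le> 1 \<Longrightarrow> pmf (step_pmf p :: 'f::finite inn pmf) ((a, b), (u, v)) =
   (if a then p else 1 - p) * (1/2) * (1 / real CARD('f)) * (1 / real CARD('f))"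
  by (simp add: step_pmf_def pmf_pair)

lemma sum_pair: "(\<Sum>t\<in>UNIV. f t) = (\<Sum>a\<in>UNIV. \<Sum>b\<in>UNIV. f (a, b))"
  for f :: "'a::finite \<times> 'b::finite \<Rightarrow> 'c::comm_monoid_add"
  by (subst sum.cartesian_product) simp

lemma sum_inn: "(\<Sum>t\<in>UNIV. f t) = (\<Sum>a\<in>UNIV. \<Sum>b\<in>UNIV. \<Sum>u\<in>UNIV. \<Sum>v\<in>UNIV. f ((a, b), (u, v)))"
  for f :: "'f::finite inn \<Rightarrow> 'b::comm_monoid_add"
proof -
  have "(\<Sum>t\<in>UNIV. f t) = (\<Sum>ab\<in>UNIV. \<Sum>uv\<in>UNIV. f (ab, uv))" by (rule sum_pair)
  also have "\<dots> = (\<Sum>ab\<in>UNIV. \<Sum>u\<in>UNIV. \<Sum>v\<in>UNIV. f (ab, (u, v)))" by (intro sum.cong refl sum_pair)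
  also have "\<dots> = (\<Sum>a\<in>UNIV. \<Sum>b\<in>UNIV. \<Sum>u\<in>UNIV. \<Sum>v\<in>UNIV. f ((a, b), (u, v)))" by (rule sum_pair)
  finally show ?thesis .
qed

lemma E_Suc:
  "(\<integral>\<^sup>+\<omega>. g (stake (Suc n) \<omega>) \<partial>(lamp_space p :: 'f::finite inn stream measure)) =
   (\<Sum>t\<in>UNIV. ennreal (pmf (step_pmf p) t) * (\<integral>\<^sup>+\<omega>. g (t # stake n \<omega>) \<partial>lamp_space p))"
proof -
  have "(\<integral>\<^sup>+\<omega>. g (stake (Suc n) \<omega>) \<partial>(lamp_space p :: 'f::finite inn stream measure)) =
     (\<integral>\<^sup>+t. (\<integral>\<^sup>+\<omega>. g (stake (Suc n) (t ## \<omega>)) \<partial>lamp_space p) \<partial>measure_pmf (step_pmf p))"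
    unfolding lamp_space_def
    by (rule prob_space.nn_integral_stream_space[OF prob_space_measure_pmf])
       (rule meas_stake[unfolded lamp_space_def], simp)
  also have "\<dots> = (\<Sum>t\<in>UNIV. ennreal (pmf (step_pmf p) t) * (\<integral>\<^sup>+\<omega>. g (t # stake n \<omega>) \<partial>lamp_space p))"
    by (simp add: nn_integral_measure_pmf nn_integral_count_space_finite)
  finally show ?thesis .
qed

lemma E_const: "(\<integral>\<^sup>+\<omega>. c \<partial>(lamp_space p :: 'f::finite inn stream measure)) = c"
  by (simp add: prob_space.emeasure_space_1[OF prob_space_lamp])

lemma prob_first:
  assumes "A \<in> sets (lamp_space p :: 'f::finite inn stream measure)"
  shows "emeasure (lamp_space p) A = (\<Sum>t\<in>UNIV. ennreal (pmf (step_pmf p) t) * emeasure (lamp_space p) {\<omega>. t ## \<omega> \<in> A})"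
proof -
  have "emeasure (lamp_space p) A = (\<integral>\<^sup>+t. emeasure (lamp_space p) {\<omega>\<in>space (lamp_space p). t ## \<omega> \<in> A} \<partial>measure_pmf (step_pmf p))"
    using assms unfolding lamp_space_def
    by (rule prob_space.emeasure_stream_space[OF prob_space_measure_pmf])
  also have "\<dots> = (\<Sum>t\<in>UNIV. ennreal (pmf (step_pmf p) t) * emeasure (lamp_space p) {\<omega>. t ## \<omega> \<in> A})"
    by (simp add: nn_integral_measure_pmf nn_integral_count_space_finite space_lamp_space)
  finally show ?thesis .
qed

definition zo :: "(int \<Rightarrow> 'f::zero) \<Rightarrow> int set \<Rightarrow> bool" where
  "zo L V \<longleftrightarrow> (\<forall>i. i \<notin> V \<longrightarrow> L i = 0)"

definition ind :: "bool \<Rightarrow> real" where "ind b = (if b then 1 else 0)"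

lemma ind_nonneg[simp]: "0 \<le> ind b" by (simp add: ind_def)

lemma sum_X: "(\<Sum>v\<in>(UNIV::'f::finite set). 1 / real CARD('f)) = 1"
  by simp

lemma avg:
  fixes M :: "int \<Rightarrow> 'f::{finite,zero}"
  shows "(\<Sum>v\<in>UNIV. 1 / real CARD('f) * ind (zo (M(y:=v)) V)) =
     (if y \<in> V then 1 else 1 / real CARD('f)) * ind (zo M (insert y V))"
proof (cases "y \<in> V")
  case True
  then have "\<And>v. zo (M(y:=v)) V = zo M (insert y V)" by (auto simp: zo_def)
  then show ?thesis using True by (simp add: sum_distrib_right[symmetric])
next
  case False
  then have e: "\<And>v. zo (M(y:=v)) V = (v = 0 \<and> zo M (insert y V))" by (auto simp: zo_def)
  have "(\<Sum>v\<in>UNIV. 1 / real CARD('f) * ind (zo (M(y:=v)) V)) =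
        (\<Sum>v\<in>UNIV. if (v::'f) = 0 then 1 / real CARD('f) * ind (zo M (insert y V)) else 0)"
    by (intro sum.cong refl) (auto simp: e ind_def)
  also have "\<dots> = 1 / real CARD('f) * ind (zo M (insert y V))" by (subst sum.delta) auto
  finally show ?thesis using False by simp
qed

lemma int_sum:
  assumes "\<And>u. 0 \<le> c u" "\<And>u xs. 0 \<le> g u xs"
  shows "(\<Sum>u\<in>UNIV. ennreal (c u) * (\<integral>\<^sup>+\<omega>. ennreal (g u (stake n \<omega>)) \<partial>(lamp_space p :: 'f::finite inn stream measure)))
       = (\<integral>\<^sup>+\<omega>. ennreal (\<Sum>u\<in>(UNIV::'a::finite set). c u * g u (stake n \<omega>)) \<partial>lamp_space p)"
proof -
  have "(\<integral>\<^sup>+\<omega>. ennreal (\<Sum>u\<in>(UNIV::'a::finite set). c u * g u (stake n \<omega>)) \<partial>(lamp_space p :: 'f::finite inn stream measure))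
      = (\<integral>\<^sup>+\<omega>. (\<Sum>u\<in>(UNIV::'a::finite set). ennreal (c u) * ennreal (g u (stake n \<omega>))) \<partial>lamp_space p)"
    using assms by (intro nn_integral_cong) (simp add: ennreal_mult sum_ennreal[symmetric])
  also have "\<dots> = (\<Sum>u\<in>UNIV. (\<integral>\<^sup>+\<omega>. ennreal (c u) * ennreal (g u (stake n \<omega>)) \<partial>lamp_space p))"
    by (rule nn_integral_sum) (intro borel_measurable_times meas_stake, auto intro: meas_stake)
  also have "\<dots> = (\<Sum>u\<in>UNIV. ennreal (c u) * (\<integral>\<^sup>+\<omega>. ennreal (g u (stake n \<omega>)) \<partial>lamp_space p))"
    by (intro sum.cong refl nn_integral_cmult) (rule meas_stake, simp)
  finally show ?thesis by simp
qed

definition lamF :: "nat \<Rightarrow> (int \<Rightarrow> 'f::zero) \<Rightarrow> wst \<Rightarrow> 'f inn list \<Rightarrow> real" where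
  "lamF m L w xs = ind (fst (snd (runW w xs)) = 0 \<and> fst (runL (L, w) xs) = (\<lambda>i. 0) \<and> snd (snd (runW w xs)) = m)"

definition walkF :: "nat \<Rightarrow> (int \<Rightarrow> 'f::{zero,finite}) \<Rightarrow> wst \<Rightarrow> 'f inn list \<Rightarrow> real" where
  "walkF m L w xs = ind (fst (snd (runW w xs)) = 0 \<and> snd (snd (runW w xs)) = m) * ind (zo L (vis w xs))
     * (1 / real CARD('f)) ^ card (vis w xs)"

lemma lamF_nonneg[simp]: "0 \<le> lamF m L w xs" by (simp add: lamF_def)
lemma walkF_nonneg[simp]: "0 \<le> walkF m L w xs" by (simp add: walkF_def)

lemma lnext_active: "0 < fst (snd w) \<Longrightarrow>
   lnext (L, w) t = ((L(fst w := fst (snd t)))(fst (wnext w t) := snd (snd t)), wnext w t)"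
  by (simp add: lnext_def)

lemma wnext_uv: "wnext w ((a, b), (u, v)) = wnext w ((a, b), (u', v'))"
  by (cases w) (simp add: wnext_def Let_def)

lemma int_sum2:
  assumes "\<And>u v. 0 \<le> c u v" "\<And>u v xs. 0 \<le> g u v xs"
  shows "(\<Sum>u\<in>UNIV. \<Sum>v\<in>UNIV. ennreal (c u v) * (\<integral>\<^sup>+\<omega>. ennreal (g u v (stake n \<omega>)) \<partial>(lamp_space p :: 'f::finite inn stream measure)))
       = (\<integral>\<^sup>+\<omega>. ennreal (\<Sum>u\<in>(UNIV::'a::finite set). \<Sum>v\<in>(UNIV::'b::finite set). c u v * g u v (stake n \<omega>)) \<partial>lamp_space p)"
proof -
  have "(\<Sum>u\<in>UNIV. \<Sum>v\<in>UNIV. ennreal (c u v) * (\<integral>\<^sup>+\<omega>. ennreal (g u v (stake n \<omega>)) \<partial>(lamp_space p :: 'f::finite inn stream measure)))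
    = (\<Sum>u\<in>(UNIV::'a set). ennreal 1 * (\<integral>\<^sup>+\<omega>. ennreal (\<Sum>v\<in>(UNIV::'b::finite set). c u v * g u v (stake n \<omega>)) \<partial>lamp_space p))"
    by (intro sum.cong refl) (simp add: int_sum assms)
  also have "\<dots> = (\<integral>\<^sup>+\<omega>. ennreal (\<Sum>u\<in>(UNIV::'a::finite set). 1 * (\<Sum>v\<in>(UNIV::'b::finite set). c u v * g u v (stake n \<omega>))) \<partial>lamp_space p)"
    by (rule int_sum) (auto intro!: sum_nonneg assms mult_nonneg_nonneg)
  finally show ?thesis by simp
qed

lemma walk_step_ne: "walk_step x c \<noteq> x"
  using walk_step_diff[of x c] by auto

lemma pointwise:
  fixes L :: "int \<Rightarrow> 'f::{finite,zero}" and K :: real and a b :: bool and w :: wst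
  assumes act: "0 < fst (snd w)"
  defines "X \<equiv> 1 / real CARD('f)"
  defines "w' \<equiv> wnext w ((a, b), (0::'f, 0::'f))"
  shows "(\<Sum>u\<in>UNIV. \<Sum>v\<in>UNIV. K * X * X *
            (if fst (snd w') = 0 then lamF m ((L(fst w := u))(fst w' := v)) w' xs
             else walkF m ((L(fst w := u))(fst w' := v)) w' xs))
       = (\<Sum>u\<in>UNIV. \<Sum>v\<in>UNIV. K * X * X * walkF m L w (((a, b), (u, v)) # xs))"
proof -
  define x where "x = fst w"
  define x' where "x' = fst w'"
  have xx: "x \<noteq> x'" unfolding x_def x'_def w'_def using act by (simp add: wnext_pos walk_step_ne[symmetric])
  have wuv: "\<And>u v. wnext w ((a, b), (u, v)) = w'" unfolding w'_def by (rule wnext_uv)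
  define V' where "V' = vis w' xs"
  define D where "D = ind (fst (snd (runW w' xs)) = 0 \<and> snd (snd (runW w' xs)) = m)"
  have fV: "finite V'" unfolding V'_def by (rule vis_finite)
  have x'V: "x' \<in> V'" unfolding V'_def x'_def by (rule pos_in_vis)
  have R: "\<And>u v. walkF m L w (((a, b), (u, v)) # xs) = D * ind (zo L (insert x V')) * X ^ card (insert x V')"
    using act by (simp add: walkF_def wuv D_def V'_def x_def X_def)
  have sX: "(\<Sum>u\<in>(UNIV::'f set). X) = 1" unfolding X_def by simp
  have "(\<Sum>u\<in>UNIV. \<Sum>v\<in>UNIV. K * X * X * walkF m L w (((a, b), (u, v)) # xs))
      = K * (D * ind (zo L (insert x V')) * X ^ card (insert x V')) * ((\<Sum>u\<in>(UNIV::'f set). X) * (\<Sum>u\<in>(UNIV::'f set). X))"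
    unfolding R by (simp add: sum_distrib_left sum_distrib_right mult_ac)
  also have "\<dots> = K * (D * ind (zo L (insert x V')) * X ^ card (insert x V'))" unfolding sX by simp
  finally have RHS: "(\<Sum>u\<in>UNIV. \<Sum>v\<in>UNIV. K * X * X * walkF m L w (((a, b), (u, v)) # xs))
      = K * (D * ind (zo L (insert x V')) * X ^ card (insert x V'))" .
  show ?thesis
  proof (cases "fst (snd w') = 0")
    case True
    have V'e: "V' = {x'}" unfolding V'_def x'_def using True by (simp add: vis_done)
    have Dw: "D = ind (snd (snd w') = m)" unfolding D_def using True by (simp add: runW_done)
    have lam: "\<And>M. lamF m M w' xs = ind (snd (snd w') = m) * ind (zo M {})"
      using True by (simp add: lamF_def runW_done runL_done zo_def ind_def fun_eq_iff)
    have "(\<Sum>u\<in>UNIV. \<Sum>v\<in>UNIV. K * X * X * lamF m ((L(x := u))(x' := v)) w' xs)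
        = K * ind (snd (snd w') = m) * (\<Sum>u\<in>UNIV. X * (\<Sum>v\<in>UNIV. X * ind (zo ((L(x := u))(x' := v)) {})))"
      unfolding lam by (simp add: sum_distrib_left sum_distrib_right mult_ac)
    also have "\<dots> = K * ind (snd (snd w') = m) * (\<Sum>u\<in>UNIV. X * (X * ind (zo (L(x := u)) {x'})))"
      unfolding X_def by (subst avg) simp
    also have "\<dots> = K * ind (snd (snd w') = m) * X * (\<Sum>u\<in>UNIV. X * ind (zo (L(x := u)) {x'}))"
      by (simp add: sum_distrib_left mult_ac)
    also have "\<dots> = K * ind (snd (snd w') = m) * X * (X * ind (zo L {x, x'}))"
      unfolding X_def using xx by (subst avg) simp
    also have "\<dots> = K * (D * ind (zo L (insert x V')) * X ^ card (insert x V'))"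
      using xx by (simp add: V'e Dw power2_eq_square mult_ac)
    finally show ?thesis using True RHS by (simp add: x_def x'_def)
  next
    case False
    have wlk: "\<And>M. walkF m M w' xs = D * X ^ card V' * ind (zo M V')"
      by (simp add: walkF_def D_def V'_def X_def)
    have "(\<Sum>u\<in>UNIV. \<Sum>v\<in>UNIV. K * X * X * walkF m ((L(x := u))(x' := v)) w' xs)
        = K * D * X ^ card V' * (\<Sum>u\<in>UNIV. X * (\<Sum>v\<in>UNIV. X * ind (zo ((L(x := u))(x' := v)) V')))"
      unfolding wlk by (simp add: sum_distrib_left sum_distrib_right mult_ac)
    also have "\<dots> = K * D * X ^ card V' * (\<Sum>u\<in>UNIV. X * ind (zo (L(x := u)) V'))"
      unfolding X_def using x'V by (subst avg) (simp add: insert_absorb)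
    also have "\<dots> = K * D * X ^ card V' * ((if x \<in> V' then 1 else X) * ind (zo L (insert x V')))"
      unfolding X_def by (subst avg) simp
    also have "\<dots> = K * (D * ind (zo L (insert x V')) * X ^ card (insert x V'))"
      using fV by (simp add: insert_absorb mult_ac)
    finally show ?thesis using False RHS by (simp add: x_def x'_def)
  qed
qed

lemma lamF_Cons: "0 < fst (snd w) \<Longrightarrow> lamF m L w (t # xs) =
   lamF m ((L(fst w := fst (snd t)))(fst (wnext w t) := snd (snd t))) (wnext w t) xs"
  by (simp add: lamF_def lnext_active)

lemma P1:
  fixes L :: "int \<Rightarrow> 'f::{finite,group_add}"
  assumes p: "0 \<le> p" "p \<le> 1" and act: "0 < fst (snd w)"
  shows "(\<integral>\<^sup>+\<omega>. ennreal (lamF m L w (stake n \<omega>)) \<partial>(lamp_space p :: 'f inn stream measure))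
       = (\<integral>\<^sup>+\<omega>. ennreal (walkF m L w (stake n \<omega>)) \<partial>lamp_space p)"
  using act
proof (induction n arbitrary: L w)
  case 0
  then show ?case by (simp add: lamF_def walkF_def ind_def)
next
  case (Suc n)
  define X where "X = 1 / real CARD('f)"
  define K where "K = (\<lambda>a::bool. (if a then p else 1 - p) * (1/2))"
  have Kn: "\<And>a. 0 \<le> K a" using p by (simp add: K_def)
  have pm: "\<And>a b u v. pmf (step_pmf p :: 'f inn pmf) ((a, b), (u, v)) = K a * X * X"
    using p by (simp add: pmf_step K_def X_def)
  define w' where "w' = (\<lambda>a b. wnext w ((a, b), (0::'f, 0::'f)))"
  have wuv: "\<And>a b u v. wnext w ((a, b), (u, v)) = w' a b" unfolding w'_def by (rule wnext_uv)
  have coin: "(\<Sum>u\<in>UNIV. \<Sum>v\<in>UNIV. ennreal (K a * X * X) *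
      (\<integral>\<^sup>+\<omega>. ennreal (lamF m ((L(fst w := u))(fst (w' a b) := v)) (w' a b) (stake n \<omega>)) \<partial>(lamp_space p :: 'f inn stream measure)))
    = (\<Sum>u\<in>UNIV. \<Sum>v\<in>UNIV. ennreal (K a * X * X) *
      (\<integral>\<^sup>+\<omega>. ennreal (walkF m L w (((a, b), (u, v)) # stake n \<omega>)) \<partial>(lamp_space p :: 'f inn stream measure)))"
    for a b
  proof -
    have "(\<Sum>u\<in>UNIV. \<Sum>v\<in>UNIV. ennreal (K a * X * X) *
      (\<integral>\<^sup>+\<omega>. ennreal (lamF m ((L(fst w := u))(fst (w' a b) := v)) (w' a b) (stake n \<omega>)) \<partial>(lamp_space p :: 'f inn stream measure)))
      = (\<Sum>u\<in>UNIV. \<Sum>v\<in>UNIV. ennreal (K a * X * X) *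
      (\<integral>\<^sup>+\<omega>. ennreal (if fst (snd (w' a b)) = 0 then lamF m ((L(fst w := u))(fst (w' a b) := v)) (w' a b) (stake n \<omega>)
          else walkF m ((L(fst w := u))(fst (w' a b) := v)) (w' a b) (stake n \<omega>)) \<partial>(lamp_space p :: 'f inn stream measure)))"
    proof (intro sum.cong refl arg_cong2[where f="(*)"])
      fix u v
      show "(\<integral>\<^sup>+\<omega>. ennreal (lamF m ((L(fst w := u))(fst (w' a b) := v)) (w' a b) (stake n \<omega>)) \<partial>(lamp_space p :: 'f inn stream measure)) =
         (\<integral>\<^sup>+\<omega>. ennreal (if fst (snd (w' a b)) = 0 then lamF m ((L(fst w := u))(fst (w' a b) := v)) (w' a b) (stake n \<omega>)
          else walkF m ((L(fst w := u))(fst (w' a b) := v)) (w' a b) (stake n \<omega>)) \<partial>(lamp_space p :: 'f inn stream measure))"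
        using Suc.IH[where w="w' a b" and L="(L(fst w := u))(fst (w' a b) := v)"]
        by (cases "fst (snd (w' a b)) = 0") (simp_all only: if_True if_False, simp_all)
    qed
    also have "\<dots> = (\<integral>\<^sup>+\<omega>. ennreal (\<Sum>u\<in>UNIV. \<Sum>v\<in>UNIV. K a * X * X *
          (if fst (snd (w' a b)) = 0 then lamF m ((L(fst w := u))(fst (w' a b) := v)) (w' a b) (stake n \<omega>)
          else walkF m ((L(fst w := u))(fst (w' a b) := v)) (w' a b) (stake n \<omega>))) \<partial>(lamp_space p :: 'f inn stream measure))"
      by (rule int_sum2) (auto simp: Kn X_def)
    also have "\<dots> = (\<integral>\<^sup>+\<omega>. ennreal (\<Sum>u\<in>UNIV. \<Sum>v\<in>UNIV. K a * X * X *
          walkF m L w (((a, b), (u, v)) # stake n \<omega>)) \<partial>(lamp_space p :: 'f inn stream measure))"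
      by (intro nn_integral_cong arg_cong[where f=ennreal])
         (unfold w'_def X_def, rule pointwise[OF Suc.prems])
    also have "\<dots> = (\<Sum>u\<in>UNIV. \<Sum>v\<in>UNIV. ennreal (K a * X * X) *
      (\<integral>\<^sup>+\<omega>. ennreal (walkF m L w (((a, b), (u, v)) # stake n \<omega>)) \<partial>(lamp_space p :: 'f inn stream measure)))"
      by (rule int_sum2[symmetric]) (auto simp: Kn X_def)
    finally show ?thesis .
  qed
  have "(\<integral>\<^sup>+\<omega>. ennreal (lamF m L w (stake (Suc n) \<omega>)) \<partial>(lamp_space p :: 'f inn stream measure))
      = (\<Sum>t\<in>UNIV. ennreal (pmf (step_pmf p) t) * (\<integral>\<^sup>+\<omega>. ennreal (lamF m L w (t # stake n \<omega>)) \<partial>lamp_space p))"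
    by (rule E_Suc)
  also have "\<dots> = (\<Sum>a\<in>UNIV. \<Sum>b\<in>UNIV. \<Sum>u\<in>UNIV. \<Sum>v\<in>UNIV. ennreal (K a * X * X) *
      (\<integral>\<^sup>+\<omega>. ennreal (lamF m ((L(fst w := u))(fst (w' a b) := v)) (w' a b) (stake n \<omega>)) \<partial>(lamp_space p :: 'f inn stream measure)))"
    by (subst sum_inn) (simp add: pm lamF_Cons[OF Suc.prems] wuv)
  also have "\<dots> = (\<Sum>a\<in>UNIV. \<Sum>b\<in>UNIV. \<Sum>u\<in>UNIV. \<Sum>v\<in>UNIV. ennreal (K a * X * X) *
      (\<integral>\<^sup>+\<omega>. ennreal (walkF m L w (((a, b), (u, v)) # stake n \<omega>)) \<partial>(lamp_space p :: 'f inn stream measure)))"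
    by (intro sum.cong refl coin)
  also have "\<dots> = (\<Sum>t\<in>UNIV. ennreal (pmf (step_pmf p) t) * (\<integral>\<^sup>+\<omega>. ennreal (walkF m L w (t # stake n \<omega>)) \<partial>lamp_space p))"
    by (subst sum_inn[where f="\<lambda>t. ennreal (pmf (step_pmf p) t) * (\<integral>\<^sup>+\<omega>. ennreal (walkF m L w (t # stake n \<omega>)) \<partial>lamp_space p)"]) (simp add: pm)
  also have "\<dots> = (\<integral>\<^sup>+\<omega>. ennreal (walkF m L w (stake (Suc n) \<omega>)) \<partial>(lamp_space p :: 'f inn stream measure))"
    by (rule E_Suc[symmetric])
  finally show ?case .
qed

definition Gf :: "real \<Rightarrow> nat \<Rightarrow> real" where
  "Gf lam A = 1 - (lam - 1) / (lam ^ A - 1)"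

lemma ruin:
  fixes h :: "nat \<Rightarrow> real"
  assumes p: "1/2 < p" "p < 1" and A: "1 \<le> A"
    and rec: "\<And>y. 0 < y \<Longrightarrow> y < A \<Longrightarrow> h y = p * h (y - 1) + (1 - p) * h (y + 1)"
    and hA: "h A = 0"
  shows "h 1 = h 0 * Gf (p / (1 - p)) A"
proof -
  define q where "q = 1 - p"
  define lam where "lam = p / q"
  have q0: "0 < q" using p by (simp add: q_def)
  have lam1: "1 < lam" using p q0 by (simp add: lam_def q_def field_simps)
  define d where "d = (\<lambda>y. h (Suc y) - h y)"
  have step: "d y = lam * d (y - 1)" if "0 < y" "y < A" for y
  proof -
    have "h y = p * h (y - 1) + q * h (y + 1)" using rec[OF that] by (simp add: q_def)
    then have "q * (h (y+1) - h y) = p * (h y - h (y - 1))" by (simp add: q_def algebra_simps)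
    then have "d y = (p / q) * (h y - h (y - 1))" using q0 by (simp add: d_def field_simps)
    moreover have "h y - h (y - 1) = d (y - 1)" using that by (simp add: d_def)
    ultimately show ?thesis by (simp add: lam_def)
  qed
  have dy: "y < A \<Longrightarrow> d y = lam ^ y * d 0" for y
  proof (induction y)
    case 0 then show ?case by simp
  next
    case (Suc y)
    then have "d (Suc y) = lam * d y" using step[of "Suc y"] by simp
    then show ?case using Suc by simp
  qed
  have "h A - h 0 = (\<Sum>y<A. d y)" unfolding d_def by (rule sum_lessThan_telescope[symmetric])
  also have "\<dots> = (\<Sum>y<A. lam ^ y * d 0)" by (rule sum.cong[OF refl]) (rule dy, simp)
  also have "\<dots> = (\<Sum>y<A. lam ^ y) * d 0" by (simp only: sum_distrib_right)
  also have "(\<Sum>y<A. lam ^ y) = (lam ^ A - 1) / (lam - 1)"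
    using lam1 by (subst sum_gp_strict) (simp_all add: field_simps)
  finally have e: "- h 0 = (lam ^ A - 1) / (lam - 1) * d 0" using hA by simp
  have lA: "1 < lam ^ A" using lam1 A by (simp add: one_less_power)
  then have "d 0 = - h 0 * (lam - 1) / (lam ^ A - 1)" using e lam1 by (simp add: field_simps)
  then have "h 1 = h 0 + (- h 0 * (lam - 1) / (lam ^ A - 1))" by (simp add: d_def)
  also have "\<dots> = h 0 * Gf lam A" by (simp add: Gf_def algebra_simps diff_divide_distrib)
  finally show ?thesis by (simp add: lam_def q_def)
qed

fun Qf :: "real \<Rightarrow> real \<Rightarrow> nat \<Rightarrow> nat \<Rightarrow> nat \<Rightarrow> real" where
  "Qf \<alpha> \<beta> m 0 c = ind (c = m)"
| "Qf \<alpha> \<beta> m (Suc j) c = \<alpha> * Qf \<alpha> \<beta> m j (Suc c) + \<beta> * Qf \<alpha> \<beta> m j c"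

lemma Qf_closed: "Qf \<alpha> \<beta> m j c = (if c \<le> m then real (j choose (m - c)) * \<alpha> ^ (m - c) * \<beta> ^ (j - (m - c)) else 0)"
proof (induction j arbitrary: c)
  case 0
  then show ?case by (auto simp: ind_def)
next
  case (Suc j)
  show ?case
  proof (cases "c \<le> m")
    case False
    then show ?thesis using Suc by simp
  next
    case True
    show ?thesis
    proof (cases "c = m")
      case True
      then show ?thesis using Suc by simp
    next
      case False
      then obtain d where d: "m - c = Suc d" using True by (metis Suc_diff_Suc le_neq_implies_less)
      have d': "m - Suc c = d" using d by simp
      have IH1: "Qf \<alpha> \<beta> m j (Suc c) = real (j choose d) * \<alpha> ^ d * \<beta> ^ (j - d)"
        using Suc.IH[of "Suc c"] True False d' by simp
      have IH2: "Qf \<alpha> \<beta> m j c = real (j choose Suc d) * \<alpha> ^ Suc d * \<beta> ^ (j - Suc d)"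
        using Suc.IH[of c] True d by simp
      have goal: "\<alpha> * (real (j choose d) * \<alpha> ^ d * \<beta> ^ (j - d)) + \<beta> * (real (j choose Suc d) * \<alpha> ^ Suc d * \<beta> ^ (j - Suc d))
          = real (Suc j choose Suc d) * \<alpha> ^ Suc d * \<beta> ^ (Suc j - Suc d)"
      proof (cases "Suc d \<le> j")
        case True
        then have e1: "\<beta> ^ (j - d) = \<beta> * \<beta> ^ (j - Suc d)" by (simp add: Suc_diff_Suc[symmetric] del: Suc_diff_Suc)
        show ?thesis using True by (simp add: e1 algebra_simps)
      next
        case False
        then show ?thesis by (cases "d = j") (auto simp: binomial_eq_0)
      qed
      show ?thesis using True goal IH1 IH2 d by simp
    qed
  qed
qed

definition gab :: "nat \<Rightarrow> nat \<Rightarrow> nat \<Rightarrow> wst \<Rightarrow> 'f inn list \<Rightarrow> bool" where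
  "gab A B m w xs \<longleftrightarrow> fst (snd (runW w xs)) = 0 \<and> snd (snd (runW w xs)) = m \<and> vis w xs \<subseteq> {- int B<..<int A}"

definition Eab :: "nat \<Rightarrow> nat \<Rightarrow> nat \<Rightarrow> wst \<Rightarrow> 'f inn stream set" where
  "Eab A B m w = {\<omega>. \<exists>n. gab A B m w (stake n \<omega>)}"

definition fE :: "'f::finite itself \<Rightarrow> real \<Rightarrow> nat \<Rightarrow> nat \<Rightarrow> nat \<Rightarrow> wst \<Rightarrow> real" where
  "fE F p A B m w = measure (lamp_space p :: 'f inn stream measure) (Eab A B m w)"

lemma gab_Cons: "0 < fst (snd w) \<Longrightarrow> gab A B m w (t # xs) \<longleftrightarrow> fst w \<in> {- int B<..<int A} \<and> gab A B m (wnext w t) xs"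
  by (auto simp: gab_def)

lemma gab_Nil: "0 < fst (snd w) \<Longrightarrow> \<not> gab A B m w []"
  by (simp add: gab_def)

lemma Eab_shift:
  assumes "0 < fst (snd w)"
  shows "{\<omega>. t ## \<omega> \<in> Eab A B m w} = (if fst w \<in> {- int B<..<int A} then Eab A B m (wnext w t) else {})"
proof -
  have "(\<exists>n. gab A B m w (stake n (t ## \<omega>))) \<longleftrightarrow> fst w \<in> {- int B<..<int A} \<and> (\<exists>n. gab A B m (wnext w t) (stake n \<omega>))" for \<omega>
  proof
    assume "\<exists>n. gab A B m w (stake n (t ## \<omega>))"
    then obtain n where n: "gab A B m w (stake n (t ## \<omega>))" by blast
    then obtain n' where "n = Suc n'" using gab_Nil[OF assms] by (cases n) auto
    then have "gab A B m w (t # stake n' \<omega>)" using n by simp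
    then show "fst w \<in> {- int B<..<int A} \<and> (\<exists>n. gab A B m (wnext w t) (stake n \<omega>))"
      using gab_Cons[OF assms, of A B m t "stake n' \<omega>"] by blast
  next
    assume "fst w \<in> {- int B<..<int A} \<and> (\<exists>n. gab A B m (wnext w t) (stake n \<omega>))"
    then obtain n where "fst w \<in> {- int B<..<int A}" "gab A B m (wnext w t) (stake n \<omega>)" by blast
    then have "gab A B m w (t # stake n \<omega>)" using gab_Cons[OF assms, of A B m t "stake n \<omega>"] by blast
    then have "gab A B m w (stake (Suc n) (t ## \<omega>))" by simp
    then show "\<exists>n. gab A B m w (stake n (t ## \<omega>))" by blast
  qed
  then show ?thesis unfolding Eab_def by auto
qed

lemma Eab_done: "fst (snd w) = 0 \<Longrightarrow> Eab A B m w = (if snd (snd w) = m \<and> fst w \<in> {- int B<..<int A} then UNIV else {})"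
  by (auto simp: Eab_def gab_def runW_done vis_done)

lemma Eab_out: "fst w \<notin> {- int B<..<int A} \<Longrightarrow> Eab A B m w = {}"
  using pos_in_vis by (fastforce simp: Eab_def gab_def)

definition wcoin :: "wst \<Rightarrow> bool \<times> bool \<Rightarrow> wst" where
  "wcoin w ab = wnext w (ab, (undefined :: unit \<times> unit))"

lemma wnext_coin: "wnext w t = wcoin w (fst t)"
  by (cases w) (simp add: wcoin_def wnext_def Let_def)

lemma sum_uv: "(\<Sum>u\<in>(UNIV::'f::finite set). \<Sum>v\<in>(UNIV::'f set). c * (1 / real CARD('f)) * (1 / real CARD('f)) * z) = c * z"
  by simp

lemma fE_step:
  fixes F :: "'f::{finite,group_add} itself"
  assumes p: "0 \<le> p" "p \<le> 1" and act: "0 < fst (snd w)" and rng: "fst w \<in> {- int B<..<int A}"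
  shows "fE F p A B m w = (\<Sum>a\<in>UNIV. \<Sum>b\<in>UNIV. (if a then p else 1 - p) * (1/2) * fE F p A B m (wcoin w (a, b)))"
proof -
  interpret S: prob_space "lamp_space p :: 'f inn stream measure" by (rule prob_space_lamp)
  have meas: "\<And>w. Eab A B m w \<in> sets (lamp_space p :: 'f inn stream measure)" unfolding Eab_def by (rule sets_ex_stake)
  have pmn: "\<And>t. 0 \<le> pmf (step_pmf p :: 'f inn pmf) t" by simp
  have "ennreal (fE F p A B m w) = emeasure (lamp_space p :: 'f inn stream measure) (Eab A B m w)"
    by (simp add: fE_def S.emeasure_eq_measure)
  also have "\<dots> = (\<Sum>t\<in>UNIV. ennreal (pmf (step_pmf p) t) * emeasure (lamp_space p :: 'f inn stream measure) {\<omega>. t ## \<omega> \<in> Eab A B m w})"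
    by (rule prob_first[OF meas])
  also have "\<dots> = (\<Sum>t\<in>UNIV. ennreal (pmf (step_pmf p :: 'f inn pmf) t * fE F p A B m (wnext w t)))"
    using act rng by (simp add: Eab_shift S.emeasure_eq_measure fE_def ennreal_mult)
  also have "\<dots> = ennreal (\<Sum>t\<in>UNIV. pmf (step_pmf p :: 'f inn pmf) t * fE F p A B m (wnext w t))"
    by (rule sum_ennreal) (simp add: fE_def)
  finally have e: "fE F p A B m w = (\<Sum>t\<in>UNIV. pmf (step_pmf p :: 'f inn pmf) t * fE F p A B m (wnext w t))"
    by (subst (asm) ennreal_inj) (auto simp: fE_def intro!: sum_nonneg)
  also have "\<dots> = (\<Sum>a\<in>UNIV. \<Sum>b\<in>UNIV. \<Sum>u\<in>(UNIV::'f set). \<Sum>v\<in>(UNIV::'f set). (if a then p else 1 - p) * (1/2) * (1 / real CARD('f)) * (1 / real CARD('f))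
      * fE F p A B m (wcoin w (a, b)))"
    by (subst sum_inn) (simp only: pmf_step p wnext_coin fst_conv)
  also have "\<dots> = (\<Sum>a\<in>UNIV. \<Sum>b\<in>UNIV. (if a then p else 1 - p) * (1/2) * fE F p A B m (wcoin w (a, b)))"
    by (simp only: sum_uv)
  finally show ?thesis .
qed

lemma fE_out: "fst w \<notin> {- int B<..<int A} \<Longrightarrow> fE F p A B m w = 0"
  by (simp add: fE_def Eab_out)

lemma fE_done:
  assumes "fst (snd w) = 0" "fst w \<in> {- int B<..<int A}"
  shows "fE (F::'f::finite itself) p A B m w = ind (snd (snd w) = m)"
proof -
  interpret S: prob_space "lamp_space p :: 'f inn stream measure" by (rule prob_space_lamp)
  show ?thesis using assms S.prob_space[unfolded space_lamp_space]
    by (simp add: fE_def Eab_done ind_def)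
qed

lemma fE_pos:
  fixes F :: "'f::{finite,group_add} itself"
  assumes p: "0 \<le> p" "p \<le> 1" and j: "0 < j" and y: "0 < y" "y < int A"
  shows "fE F p A B m (y, j, c) = p * fE F p A B m (y - 1, if y - 1 = 0 then j - 1 else j, c) + (1 - p) * fE F p A B m (y + 1, j, c)"
  using y j by (subst fE_step[OF p]) (auto simp: wcoin_def wnext_def walk_step_def Let_def UNIV_bool algebra_simps)

lemma fE_neg:
  fixes F :: "'f::{finite,group_add} itself"
  assumes p: "0 \<le> p" "p \<le> 1" and j: "0 < j" and y: "y < 0" "- int B < y"
  shows "fE F p A B m (y, j, c) = p * fE F p A B m (y + 1, if y + 1 = 0 then j - 1 else j, c) + (1 - p) * fE F p A B m (y - 1, j, c)"
  using y j by (subst fE_step[OF p]) (auto simp: wcoin_def wnext_def walk_step_def Let_def UNIV_bool algebra_simps)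

lemma fE_zero:
  fixes F :: "'f::{finite,group_add} itself"
  assumes p: "0 \<le> p" "p \<le> 1" and j: "0 < j" and AB: "1 \<le> A" "1 \<le> B"
  shows "fE F p A B m (0, j, c) = 1/2 * fE F p A B m (1, j, Suc c) + 1/2 * fE F p A B m (-1, j, c)"
proof -
  have "fE F p A B m (0, j, c) = (\<Sum>a\<in>UNIV. \<Sum>b\<in>UNIV. (if a then p else 1 - p) * (1/2) * fE F p A B m (wcoin (0, j, c) (a, b)))"
    by (rule fE_step[OF p]) (use j AB in auto)
  also have "\<dots> = 1/2 * fE F p A B m (1, j, Suc c) + 1/2 * fE F p A B m (-1, j, c)"
    using j by (simp add: wcoin_def wnext_def walk_step_def Let_def UNIV_bool field_simps)
  finally show ?thesis .
qed

lemma fE_side_pos: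
  fixes F :: "'f::{finite,group_add} itself"
  assumes p: "1/2 < p" "p < 1" and A: "1 \<le> A" and j: "0 < j"
  shows "fE F p A B m (1, j, c) = fE F p A B m (0, j - 1, c) * Gf (p / (1 - p)) A"
proof -
  have p': "0 \<le> p" "p \<le> 1" using p by auto
  define h where "h = (\<lambda>y::nat. if y = 0 then fE F p A B m (0, j - 1, c) else fE F p A B m (int y, j, c))"
  have rec: "h y = p * h (y - 1) + (1 - p) * h (y + 1)" if y: "0 < y" "y < A" for y
  proof -
    have "h y = fE F p A B m (int y, j, c)" using y by (simp add: h_def)
    also have "\<dots> = p * fE F p A B m (int y - 1, if int y - 1 = 0 then j - 1 else j, c) + (1 - p) * fE F p A B m (int y + 1, j, c)"
      by (rule fE_pos[OF p' j]) (use y in auto)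
    also have "fE F p A B m (int y - 1, if int y - 1 = 0 then j - 1 else j, c) = h (y - 1)"
      using y by (cases "y = 1") (auto simp: h_def of_nat_diff)
    also have "fE F p A B m (int y + 1, j, c) = h (y + 1)" by (simp add: h_def add.commute)
    finally show ?thesis .
  qed
  have hA: "h A = 0" using A by (simp add: h_def fE_out)
  have "h 1 = h 0 * Gf (p / (1 - p)) A" by (rule ruin[OF p A rec hA])
  then show ?thesis by (simp add: h_def)
qed

lemma fE_side_neg:
  fixes F :: "'f::{finite,group_add} itself"
  assumes p: "1/2 < p" "p < 1" and B: "1 \<le> B" and j: "0 < j"
  shows "fE F p A B m (-1, j, c) = fE F p A B m (0, j - 1, c) * Gf (p / (1 - p)) B"
proof -
  have p': "0 \<le> p" "p \<le> 1" using p by auto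
  define h where "h = (\<lambda>y::nat. if y = 0 then fE F p A B m (0, j - 1, c) else fE F p A B m (- int y, j, c))"
  have rec: "h y = p * h (y - 1) + (1 - p) * h (y + 1)" if y: "0 < y" "y < B" for y
  proof -
    have "h y = fE F p A B m (- int y, j, c)" using y by (simp add: h_def)
    also have "\<dots> = p * fE F p A B m (- int y + 1, if - int y + 1 = 0 then j - 1 else j, c) + (1 - p) * fE F p A B m (- int y - 1, j, c)"
      by (rule fE_neg[OF p' j]) (use y in auto)
    also have "fE F p A B m (- int y + 1, if - int y + 1 = 0 then j - 1 else j, c) = h (y - 1)"
      using y by (cases "y = 1") (auto simp: h_def of_nat_diff)
    also have "- int y - 1 = - int (y + 1)" by simp
    also have "fE F p A B m (- int (y + 1), j, c) = h (y + 1)" by (simp only: h_def) simp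
    finally show ?thesis .
  qed
  have hB: "h B = 0" using B by (simp add: h_def fE_out)
  have "h 1 = h 0 * Gf (p / (1 - p)) B" by (rule ruin[OF p B rec hB])
  then show ?thesis by (simp add: h_def)
qed

lemma fE_closed:
  fixes F :: "'f::{finite,group_add} itself"
  assumes p: "1/2 < p" "p < 1" and A: "1 \<le> A" and B: "1 \<le> B"
  shows "fE F p A B m (0, j, c) = Qf (Gf (p / (1 - p)) A / 2) (Gf (p / (1 - p)) B / 2) m j c"
proof (induction j arbitrary: c)
  case 0
  show ?case using A B by (subst fE_done) auto
next
  case (Suc j)
  have p': "0 \<le> p" "p \<le> 1" using p by auto
  have "fE F p A B m (0, Suc j, c) = 1/2 * fE F p A B m (1, Suc j, Suc c) + 1/2 * fE F p A B m (-1, Suc j, c)"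
    by (rule fE_zero[OF p' _ A B]) simp
  also have "\<dots> = 1/2 * (fE F p A B m (0, j, Suc c) * Gf (p / (1 - p)) A) + 1/2 * (fE F p A B m (0, j, c) * Gf (p / (1 - p)) B)"
    using fE_side_pos[OF p A, of "Suc j" F B m "Suc c"] fE_side_neg[OF p B, of "Suc j" F A m c] by simp
  finally show ?case using Suc.IH by (simp add: mult_ac)
qed

lemma fE_k:
  fixes F :: "'f::{finite,group_add} itself"
  assumes p: "1/2 < p" "p < 1" and A: "1 \<le> A" and B: "1 \<le> B"
  shows "fE F p A B m (0, k, 0) = real (k choose m) * (Gf (p / (1 - p)) A / 2) ^ m * (Gf (p / (1 - p)) B / 2) ^ (k - m)"
  using fE_closed[OF p A B, of F m k 0] by (simp add: Qf_closed)

lemma dep: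
  assumes "stake n \<omega> = stake n \<omega>'" "t \<le> n"
  shows "lpos \<omega> t = lpos \<omega>' t \<and> lamps \<omega> t = lamps \<omega>' t"
  using assms(2)
proof (induction t)
  case 0 then show ?case by simp
next
  case (Suc t)
  have "\<omega> !! t = \<omega>' !! t" using assms(1) Suc.prems
    by (metis Suc_le_lessD stake_nth)
  then show ?case using Suc by simp
qed

lemma factor:
  fixes \<omega> :: "'f::group_add inn stream"
  shows "lpos \<omega> t = lpos (stake t \<omega> @- zz) t \<and> lamps \<omega> t = lamps (stake t \<omega> @- zz) t"
  by (rule dep[of t]) (simp_all add: stake_shift)

lemma pred_countable:
  assumes "f \<in> measurable M (count_space UNIV)"
  shows "(\<lambda>x. P (f x)) \<in> measurable M (count_space UNIV)"
  using assms by (rule measurable_compose) simp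

lemma meas2:
  fixes f :: "'a \<Rightarrow> 'c::countable"
  assumes f: "f \<in> measurable M (count_space UNIV)" and g: "\<And>i. (\<lambda>x. h i x) \<in> measurable M N"
  shows "(\<lambda>x. h (f x) x) \<in> measurable M N"
  by (rule measurable_compose_countable'[OF g f]) simp

lemma lpos_meas: "(\<lambda>\<omega>. lpos \<omega> t) \<in> measurable (lamp_space p :: 'f::{finite,group_add} inn stream measure) (count_space UNIV)"
proof -
  have "(\<lambda>\<omega>. lpos (stake t \<omega> @- sconst undefined) t) \<in> measurable (lamp_space p :: 'f inn stream measure) (count_space UNIV)"
    by (rule meas_stake) simp
  moreover have "(\<lambda>\<omega>::'f inn stream. lpos \<omega> t) = (\<lambda>\<omega>. lpos (stake t \<omega> @- sconst undefined) t)"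
  proof (intro ext)
    fix \<omega> :: "'f inn stream"
    show "lpos \<omega> t = lpos (stake t \<omega> @- sconst undefined) t" using factor[of \<omega> t "sconst undefined"] by blast
  qed
  ultimately show ?thesis by (simp only:)
qed

lemma state_pred: "(\<lambda>\<omega>. P (lamps \<omega> t) (lpos \<omega> t)) \<in> measurable (lamp_space p :: 'f::{finite,group_add} inn stream measure) (count_space UNIV)"
proof -
  have "(\<lambda>\<omega>. P (lamps (stake t \<omega> @- sconst undefined) t) (lpos (stake t \<omega> @- sconst undefined) t)) \<in> measurable (lamp_space p :: 'f inn stream measure) (count_space UNIV)"
    by (rule meas_stake) simp
  moreover have "(\<lambda>\<omega>::'f inn stream. P (lamps \<omega> t) (lpos \<omega> t)) = (\<lambda>\<omega>. P (lamps (stake t \<omega> @- sconst undefined) t) (lpos (stake t \<omega> @- sconst undefined) t))"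
  proof (intro ext)
    fix \<omega> :: "'f inn stream"
    have "lpos \<omega> t = lpos (stake t \<omega> @- sconst undefined) t" "lamps \<omega> t = lamps (stake t \<omega> @- sconst undefined) t"
      using factor[of \<omega> t "sconst undefined"] by blast+
    then show "P (lamps \<omega> t) (lpos \<omega> t) = P (lamps (stake t \<omega> @- sconst undefined) t) (lpos (stake t \<omega> @- sconst undefined) t)"
      by (simp only:)
  qed
  ultimately show ?thesis by (simp only:)
qed

lemma rho_meas: "(\<lambda>\<omega>. rho \<omega> i) \<in> measurable (lamp_space p :: 'f::{finite,group_add} inn stream measure) (count_space UNIV)"
proof (induction i)
  case 0 then show ?case by simp
next
  case (Suc i)
  have "(\<lambda>\<omega>. LEAST n. rho \<omega> i < n \<and> lpos \<omega> n = 0) \<in> measurable (lamp_space p :: 'f inn stream measure) (count_space UNIV)"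
  proof (rule measurable_Least)
    fix n
    show "(\<lambda>\<omega>. rho \<omega> i < n \<and> lpos \<omega> n = 0) \<in> measurable (lamp_space p :: 'f inn stream measure) (count_space UNIV)"
      by (rule meas2[OF Suc.IH, where h="\<lambda>r \<omega>. r < n \<and> lpos \<omega> n = 0"]) (rule pred_countable[OF lpos_meas])
  qed
  then show ?case by simp
qed

lemma lpos_rho_meas: "(\<lambda>\<omega>. lpos \<omega> (rho \<omega> i + 1)) \<in> measurable (lamp_space p :: 'f::{finite,group_add} inn stream measure) (count_space UNIV)"
  by (rule meas2[OF rho_meas, where h="\<lambda>r \<omega>. lpos \<omega> (r + 1)"]) (rule lpos_meas)

lemma Nplus_meas: "(\<lambda>\<omega>. Nplus \<omega> i) \<in> measurable (lamp_space p :: 'f::{finite,group_add} inn stream measure) (count_space UNIV)"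
proof (induction i)
  case 0 then show ?case by (simp add: Nplus_def)
next
  case (Suc i)
  have "(\<lambda>\<omega>. Nplus \<omega> i + (if 0 < lpos \<omega> (rho \<omega> i + 1) then 1 else 0)) \<in> measurable (lamp_space p :: 'f inn stream measure) (count_space UNIV)"
    by (rule meas2[OF Suc.IH, where h="\<lambda>r \<omega>. r + (if 0 < lpos \<omega> (rho \<omega> i + 1) then 1 else 0)"])
       (rule pred_countable[OF lpos_rho_meas])
  then show ?case by (simp add: Nplus_Suc)
qed

lemma EA_sets: "{\<omega> \<in> space (lamp_space p :: 'f::{finite,group_add} inn stream measure). lstate \<omega> (rho \<omega> k) = ((\<lambda>i. 0), 0) \<and> Nplus \<omega> k = m} \<in> sets (lamp_space p)"
proof -
  have "(\<lambda>\<omega>. lstate \<omega> (rho \<omega> k) = ((\<lambda>i. 0), 0) \<and> Nplus \<omega> k = m) \<in> measurable (lamp_space p :: 'f inn stream measure) (count_space UNIV)"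
  proof (rule meas2[OF Nplus_meas, where h="\<lambda>r \<omega>. lstate \<omega> (rho \<omega> k) = ((\<lambda>i. 0), 0) \<and> r = m"])
    fix r
    show "(\<lambda>\<omega>. lstate \<omega> (rho \<omega> k) = ((\<lambda>i. 0), 0) \<and> r = m) \<in> measurable (lamp_space p :: 'f inn stream measure) (count_space UNIV)"
      by (rule meas2[OF rho_meas, where h="\<lambda>t \<omega>. lstate \<omega> t = ((\<lambda>i. 0), 0) \<and> r = m"])
         (unfold lstate_def, rule state_pred)
  qed
  then show ?thesis by (rule predE)
qed

lemma EN_sets: "{\<omega> \<in> space (lamp_space p :: 'f::{finite,group_add} inn stream measure). Nplus \<omega> k = m} \<in> sets (lamp_space p)"
  by (rule predE, rule pred_countable[OF Nplus_meas])

definition Em :: "nat \<Rightarrow> nat \<Rightarrow> 'f inn stream set" where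
  "Em k m = {\<omega>. \<exists>n. fst (snd (runW (0, k, 0) (stake n \<omega>))) = 0 \<and> snd (snd (runW (0, k, 0) (stake n \<omega>))) = m}"

definition Rr :: "nat \<Rightarrow> 'f inn stream set" where
  "Rr k = {\<omega>. \<exists>n. fst (snd (runW (0, k, 0) (stake n \<omega>))) = 0}"

definition Phi :: "nat \<Rightarrow> nat \<Rightarrow> 'f::zero inn stream set" where
  "Phi k m = {\<omega>. \<exists>n. fst (snd (runW (0, k, 0) (stake n \<omega>))) = 0 \<and> fst (runL ((\<lambda>i. 0), (0, k, 0)) (stake n \<omega>)) = (\<lambda>i. 0)
       \<and> snd (snd (runW (0, k, 0) (stake n \<omega>))) = m}"

lemma Em_union: "Em k m = (\<Union>A. Eab (Suc A) (Suc A) m (0, k, 0))"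
proof
  show "(\<Union>A. Eab (Suc A) (Suc A) m (0, k, 0)) \<subseteq> Em k m"
    by (auto simp: Eab_def Em_def gab_def)
next
  show "Em k m \<subseteq> (\<Union>A. Eab (Suc A) (Suc A) m (0, k, 0))"
  proof
    fix \<omega> assume "\<omega> \<in> Em k m"
    then obtain n where n: "fst (snd (runW (0, k, 0) (stake n \<omega>))) = 0" "snd (snd (runW (0, k, 0) (stake n \<omega>))) = m"
      by (auto simp: Em_def)
    obtain l h where lh: "vis (0, k, 0) (stake n \<omega>) = {l..h}" using vis_interval by blast
    define A where "A = nat (max (- l) h)"
    have "vis (0, k, 0) (stake n \<omega>) \<subseteq> {- int (Suc A)<..<int (Suc A)}" unfolding lh A_def by auto
    then have "\<omega> \<in> Eab (Suc A) (Suc A) m (0, k, 0)" using n unfolding Eab_def gab_def by blast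
    then show "\<omega> \<in> (\<Union>A. Eab (Suc A) (Suc A) m (0, k, 0))" by blast
  qed
qed

lemma Eab_incseq: "incseq (\<lambda>A. Eab (Suc A) (Suc A) m w)"
  by (rule incseq_SucI) (force simp: Eab_def gab_def)

lemma Gf_lim:
  assumes "1 < lam"
  shows "(\<lambda>A. Gf lam (Suc A)) \<longlonglongrightarrow> 1"
proof -
  have "filterlim (\<lambda>A. lam ^ A) at_infinity sequentially"
    by (rule filterlim_realpow_sequentially_gt1) (use assms in simp)
  then have "filterlim (\<lambda>A. lam ^ Suc A) at_infinity sequentially"
    by (simp only: filterlim_sequentially_Suc)
  then have "filterlim (\<lambda>A. (-1) + lam ^ Suc A) at_infinity sequentially"
    by (rule tendsto_add_filterlim_at_infinity[OF tendsto_const])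
  then have "(\<lambda>A. (lam - 1) / ((-1) + lam ^ Suc A)) \<longlonglongrightarrow> 0"
    by (rule tendsto_divide_0[OF tendsto_const])
  then have "(\<lambda>A. (lam - 1) / (lam ^ Suc A - 1)) \<longlonglongrightarrow> 0" by simp
  then have "(\<lambda>A. 1 - (lam - 1) / (lam ^ Suc A - 1)) \<longlonglongrightarrow> 1 - 0"
    by (intro tendsto_diff tendsto_const)
  then show ?thesis by (simp add: Gf_def)
qed

lemma Em_prob:
  assumes p: "1/2 < p" "p < 1" and mk: "m \<le> k"
  shows "measure (lamp_space p :: 'f::{finite,group_add} inn stream measure) (Em k m) = real (k choose m) / 2 ^ k"
proof -
  interpret S: prob_space "lamp_space p :: 'f inn stream measure" by (rule prob_space_lamp)
  define lam where "lam = p / (1 - p)"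
  have lam1: "1 < lam" using p by (simp add: lam_def field_simps)
  have "\<And>A. Eab (Suc A) (Suc A) m (0, k, 0) \<in> sets (lamp_space p :: 'f inn stream measure)"
    unfolding Eab_def by (rule sets_ex_stake)
  then have meas: "range (\<lambda>A. Eab (Suc A) (Suc A) m (0, k, 0)) \<subseteq> sets (lamp_space p :: 'f inn stream measure)"
    by auto
  have L1: "(\<lambda>A. measure (lamp_space p :: 'f inn stream measure) (Eab (Suc A) (Suc A) m (0, k, 0))) \<longlonglongrightarrow>
      measure (lamp_space p :: 'f inn stream measure) (Em k m)"
    unfolding Em_union by (rule S.finite_Lim_measure_incseq[OF meas Eab_incseq])
  have e: "measure (lamp_space p :: 'f inn stream measure) (Eab (Suc A) (Suc A) m (0, k, 0))
      = real (k choose m) * (Gf lam (Suc A) / 2) ^ m * (Gf lam (Suc A) / 2) ^ (k - m)" for A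
    using fE_k[OF p, of "Suc A" "Suc A" "TYPE('f)" m k] by (simp add: fE_def lam_def)
  have L2: "(\<lambda>A. real (k choose m) * (Gf lam (Suc A) / 2) ^ m * (Gf lam (Suc A) / 2) ^ (k - m))
      \<longlonglongrightarrow> real (k choose m) * (1 / 2) ^ m * (1 / 2) ^ (k - m)"
    by (intro tendsto_mult tendsto_power tendsto_divide tendsto_const Gf_lim lam1) simp_all
  have "measure (lamp_space p :: 'f inn stream measure) (Em k m) = real (k choose m) * (1 / 2) ^ m * (1 / 2) ^ (k - m)"
    using LIMSEQ_unique[OF L1 L2[folded e]] .
  also have "\<dots> = real (k choose m) / 2 ^ k"
    using mk by (simp add: power_add[symmetric] power_one_over)
  finally show ?thesis .
qed

lemma done_unique:
  fixes \<omega> :: "'f::group_add inn stream"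
  assumes "fst (snd (runW (0, k, 0) (stake n \<omega>))) = 0"
  shows "snd (snd (runW (0, k, 0) (stake n \<omega>))) = Nplus \<omega> k"
  using connect[OF assms] by simp

lemma R_prob:
  assumes p: "1/2 < p" "p < 1"
  shows "measure (lamp_space p :: 'f::{finite,group_add} inn stream measure) (Rr k) = 1"
proof -
  interpret S: prob_space "lamp_space p :: 'f inn stream measure" by (rule prob_space_lamp)
  have sE: "Em k m \<in> sets (lamp_space p :: 'f inn stream measure)" for m unfolding Em_def by (rule sets_ex_stake)
  have sR: "Rr k \<in> sets (lamp_space p :: 'f inn stream measure)" unfolding Rr_def by (rule sets_ex_stake)
  have disj: "disjoint_family_on (Em k :: nat \<Rightarrow> 'f inn stream set) {..k}"
  proof (unfold disjoint_family_on_def, intro ballI impI)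
    fix a b :: nat assume ab: "a \<noteq> b"
    show "Em k a \<inter> Em k b = ({} :: 'f inn stream set)"
    proof (rule ccontr)
      assume "Em k a \<inter> Em k b \<noteq> ({} :: 'f inn stream set)"
      then obtain \<omega> :: "'f inn stream" where "\<omega> \<in> Em k a" "\<omega> \<in> Em k b" by blast
      then obtain n1 n2 where "fst (snd (runW (0, k, 0) (stake n1 \<omega>))) = 0" "snd (snd (runW (0, k, 0) (stake n1 \<omega>))) = a"
        "fst (snd (runW (0, k, 0) (stake n2 \<omega>))) = 0" "snd (snd (runW (0, k, 0) (stake n2 \<omega>))) = b"
        unfolding Em_def by blast
      then show False using ab done_unique[where \<omega>=\<omega> and k=k and n=n1] done_unique[where \<omega>=\<omega> and k=k and n=n2] by simp
    qed
  qed
  have "measure (lamp_space p :: 'f inn stream measure) (\<Union>m\<in>{..k}. Em k m) = (\<Sum>m\<in>{..k}. measure (lamp_space p :: 'f inn stream measure) (Em k m))"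
    by (rule S.finite_measure_finite_Union) (use sE disj in auto)
  also have "\<dots> = (\<Sum>m\<in>{..k}. real (k choose m) / 2 ^ k)" by (intro sum.cong refl) (rule Em_prob[OF p], simp)
  also have "\<dots> = (\<Sum>m\<in>{..k}. real (k choose m)) / 2 ^ k" by (simp add: sum_divide_distrib)
  also have "(\<Sum>m\<in>{..k}. real (k choose m)) = real (2 ^ k)" by (simp only: of_nat_sum[symmetric] choose_row_sum)
  also have "real (2 ^ k) / 2 ^ k = (1::real)" by simp
  finally have "measure (lamp_space p :: 'f inn stream measure) (\<Union>m\<in>{..k}. Em k m) = 1" .
  moreover have "(\<Union>m\<in>{..k}. Em k m) \<subseteq> (Rr k :: 'f inn stream set)" by (auto simp: Em_def Rr_def)
  ultimately have "1 \<le> measure (lamp_space p :: 'f inn stream measure) (Rr k)" using S.finite_measure_mono[OF _ sR] by metis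
  then show ?thesis using S.prob_le_1[of "Rr k"] by simp
qed

lemma null_compl:
  assumes p: "1/2 < p" "p < 1"
  shows "measure (lamp_space p :: 'f::{finite,group_add} inn stream measure) (UNIV - Rr k) = 0"
proof -
  interpret S: prob_space "lamp_space p :: 'f inn stream measure" by (rule prob_space_lamp)
  have sR: "Rr k \<in> sets (lamp_space p :: 'f inn stream measure)" unfolding Rr_def by (rule sets_ex_stake)
  show ?thesis using S.prob_compl[OF sR] R_prob[OF p, of k] by (simp add: space_lamp_space)
qed

lemma sandwich:
  assumes p: "1/2 < p" "p < 1" and sets: "E \<in> sets (lamp_space p :: 'f::{finite,group_add} inn stream measure)" "G \<in> sets (lamp_space p :: 'f inn stream measure)"
    and sub: "G \<subseteq> E" "E \<inter> Rr k \<subseteq> G"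
  shows "measure (lamp_space p :: 'f inn stream measure) E = measure (lamp_space p :: 'f inn stream measure) G"
proof -
  interpret S: prob_space "lamp_space p :: 'f inn stream measure" by (rule prob_space_lamp)
  have sR: "UNIV - Rr k \<in> sets (lamp_space p :: 'f inn stream measure)"
  proof -
    have "Rr k \<in> sets (lamp_space p :: 'f inn stream measure)" unfolding Rr_def by (rule sets_ex_stake)
    then have "space (lamp_space p :: 'f inn stream measure) - Rr k \<in> sets (lamp_space p :: 'f inn stream measure)"
      by (rule sets.compl_sets)
    then show ?thesis by (simp add: space_lamp_space)
  qed
  have "E \<subseteq> G \<union> (UNIV - Rr k)" using sub by auto
  then have "measure (lamp_space p :: 'f inn stream measure) E \<le> measure (lamp_space p :: 'f inn stream measure) (G \<union> (UNIV - Rr k))"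
    by (intro S.finite_measure_mono) (use sets sR in auto)
  also have "\<dots> = measure (lamp_space p :: 'f inn stream measure) G + measure (lamp_space p :: 'f inn stream measure) ((UNIV - Rr k) - G)"
    by (rule S.finite_measure_Union') (use sets sR in auto)
  also have "measure (lamp_space p :: 'f inn stream measure) ((UNIV - Rr k) - G) \<le> measure (lamp_space p :: 'f inn stream measure) (UNIV - Rr k)"
    by (intro S.finite_measure_mono) (use sR in auto)
  moreover have "measure (lamp_space p :: 'f inn stream measure) (UNIV - Rr k) = 0" by (rule null_compl[OF p])
  ultimately have "measure (lamp_space p :: 'f inn stream measure) E \<le> measure (lamp_space p :: 'f inn stream measure) G"
    by simp
  moreover have "measure (lamp_space p :: 'f inn stream measure) G \<le> measure (lamp_space p :: 'f inn stream measure) E"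
    by (rule S.finite_measure_mono[OF sub(1) sets(1)])
  ultimately show ?thesis by simp
qed

lemma EN_prob:
  assumes p: "1/2 < p" "p < 1" and mk: "m \<le> k"
  shows "measure (lamp_space p :: 'f::{finite,group_add} inn stream measure) {\<omega> \<in> space (lamp_space p :: 'f inn stream measure). Nplus \<omega> k = m}
    = real (k choose m) / 2 ^ k"
proof -
  have "measure (lamp_space p :: 'f::{finite,group_add} inn stream measure) {\<omega> \<in> space (lamp_space p :: 'f inn stream measure). Nplus \<omega> k = m}
    = measure (lamp_space p :: 'f::{finite,group_add} inn stream measure) (Em k m)"
  proof (rule sandwich[OF p EN_sets])
    show "Em k m \<in> sets (lamp_space p :: 'f inn stream measure)" unfolding Em_def by (rule sets_ex_stake)
    show "Em k m \<subseteq> {\<omega> \<in> space (lamp_space p :: 'f inn stream measure). Nplus \<omega> k = m}"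
    proof
      fix \<omega> :: "'f inn stream" assume "\<omega> \<in> Em k m"
      then obtain n where "fst (snd (runW (0, k, 0) (stake n \<omega>))) = 0" "snd (snd (runW (0, k, 0) (stake n \<omega>))) = m"
        unfolding Em_def by blast
      then show "\<omega> \<in> {\<omega> \<in> space (lamp_space p :: 'f inn stream measure). Nplus \<omega> k = m}"
        using done_unique[where \<omega>=\<omega> and k=k and n=n] by (simp add: space_lamp_space)
    qed
    show "{\<omega> \<in> space (lamp_space p :: 'f inn stream measure). Nplus \<omega> k = m} \<inter> Rr k \<subseteq> Em k m"
    proof
      fix \<omega> :: "'f inn stream" assume a: "\<omega> \<in> {\<omega> \<in> space (lamp_space p :: 'f inn stream measure). Nplus \<omega> k = m} \<inter> Rr k"
      then obtain n where "fst (snd (runW (0, k, 0) (stake n \<omega>))) = 0" unfolding Rr_def by blast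
      then show "\<omega> \<in> Em k m" using a done_unique[where \<omega>=\<omega> and k=k and n=n] unfolding Em_def by auto
    qed
  qed
  then show ?thesis using Em_prob[OF p mk] by simp
qed

lemma EA_prob:
  assumes p: "1/2 < p" "p < 1"
  shows "measure (lamp_space p :: 'f::{finite,group_add} inn stream measure)
      {\<omega> \<in> space (lamp_space p :: 'f inn stream measure). lstate \<omega> (rho \<omega> k) = ((\<lambda>i. 0), 0) \<and> Nplus \<omega> k = m}
    = measure (lamp_space p :: 'f::{finite,group_add} inn stream measure) (Phi k m)"
proof (rule sandwich[OF p EA_sets])
  show "Phi k m \<in> sets (lamp_space p :: 'f inn stream measure)" unfolding Phi_def by (rule sets_ex_stake)
  show "Phi k m \<subseteq> {\<omega> \<in> space (lamp_space p :: 'f inn stream measure). lstate \<omega> (rho \<omega> k) = ((\<lambda>i. 0), 0) \<and> Nplus \<omega> k = m}"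
  proof
    fix \<omega> :: "'f inn stream" assume "\<omega> \<in> Phi k m"
    then obtain n where n: "fst (snd (runW (0, k, 0) (stake n \<omega>))) = 0" "fst (runL ((\<lambda>i. 0), (0, k, 0)) (stake n \<omega>)) = (\<lambda>i. 0)"
       "snd (snd (runW (0, k, 0) (stake n \<omega>))) = m"
      unfolding Phi_def by blast
    then show "\<omega> \<in> {\<omega> \<in> space (lamp_space p :: 'f inn stream measure). lstate \<omega> (rho \<omega> k) = ((\<lambda>i. 0), 0) \<and> Nplus \<omega> k = m}"
      using connect[where \<omega>=\<omega> and k=k and n=n] by (simp add: space_lamp_space)
  qed
  show "{\<omega> \<in> space (lamp_space p :: 'f inn stream measure). lstate \<omega> (rho \<omega> k) = ((\<lambda>i. 0), 0) \<and> Nplus \<omega> k = m} \<inter> Rr k \<subseteq> Phi k m"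
  proof
    fix \<omega> :: "'f inn stream" assume a: "\<omega> \<in> {\<omega> \<in> space (lamp_space p :: 'f inn stream measure). lstate \<omega> (rho \<omega> k) = ((\<lambda>i. 0), 0) \<and> Nplus \<omega> k = m} \<inter> Rr k"
    then obtain n where n: "fst (snd (runW (0, k, 0) (stake n \<omega>))) = 0" unfolding Rr_def by blast
    then show "\<omega> \<in> Phi k m" using a connect[where \<omega>=\<omega> and k=k and n=n] unfolding Phi_def by auto
  qed
qed

lemma vis_append_done: "fst (snd (runW w xs)) = 0 \<Longrightarrow> vis w (xs @ ys) = vis w xs"
proof (induction xs arbitrary: w)
  case Nil then show ?case by (simp add: vis_done)
next
  case (Cons t xs)
  then show ?case by (cases "fst (snd w) = 0") auto
qed

lemma gab_mono_n:
  assumes g: "gab A B m w (stake n \<omega>)"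
  shows "gab A B m w (stake (Suc n) \<omega>)"
proof -
  have d: "fst (snd (runW w (stake n \<omega>))) = 0" using g by (simp add: gab_def)
  have r: "runW w (stake (Suc n) \<omega>) = runW w (stake n \<omega>)" unfolding stake_Suc runW_append using d runW_done by simp
  have v: "vis w (stake (Suc n) \<omega>) = vis w (stake n \<omega>)" unfolding stake_Suc using vis_append_done[OF d] .
  show ?thesis using g unfolding gab_def r v .
qed

lemma Phi_mono_n:
  assumes "fst (snd (runW w (stake n \<omega>))) = 0"
  shows "runL (L, w) (stake (Suc n) \<omega>) = runL (L, w) (stake n \<omega>)"
proof -
  have "fst (snd (snd (runL (L, w) (stake n \<omega>)))) = 0" using assms by (simp add: snd_runL)
  then show ?thesis unfolding stake_Suc runL_append by (simp add: runL_done)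
qed

lemma tail_sums:
  fixes X :: real
  assumes "0 \<le> X" "X < 1"
  shows "(\<lambda>a. X ^ Suc a * ind (H \<le> a)) sums (X ^ Suc H / (1 - X))"
proof -
  have "(\<lambda>i. X ^ Suc H * X ^ i) sums (X ^ Suc H * (1 / (1 - X)))"
    by (rule sums_mult) (rule geometric_sums, use assms in simp)
  moreover have "(\<lambda>i. X ^ Suc (i + H) * ind (H \<le> i + H)) = (\<lambda>i. X ^ Suc H * X ^ i)"
    by (auto simp: ind_def power_add)
  ultimately have "(\<lambda>i. X ^ Suc (i + H) * ind (H \<le> i + H)) sums (X ^ Suc H / (1 - X))" by simp
  then have "(\<lambda>a. X ^ Suc a * ind (H \<le> a)) sums (X ^ Suc H / (1 - X) + (\<Sum>i<H. X ^ Suc i * ind (H \<le> i)))"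
    by (rule iffD1[OF sums_iff_shift[where f="\<lambda>a. X ^ Suc a * ind (H \<le> a)"]])
  moreover have "(\<Sum>i<H. X ^ Suc i * ind (H \<le> i)) = 0" by (simp add: ind_def)
  ultimately show ?thesis by simp
qed

lemma tail_ennreal:
  fixes X :: real
  assumes "0 \<le> X" "X < 1"
  shows "(\<Sum>a. ennreal (X ^ Suc a * ind (H \<le> a))) = ennreal (X ^ Suc H / (1 - X))"
  by (rule suminf_ennreal_eq[OF _ tail_sums[OF assms]]) (use assms in simp)

lemma pw:
  fixes X :: real
  assumes X: "0 < X" "X < 1" "X = 1 / real CARD('f::{finite,zero})"
  shows "ennreal (walkF m (\<lambda>i. 0::'f) (0, k, 0) xs) = ennreal ((1 - X)^2 / X) *
     (\<Sum>a. \<Sum>b. ennreal (X ^ Suc a * X ^ Suc b) * ennreal (ind (gab (Suc a) (Suc b) m (0, k, 0) xs)))"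
proof -
  obtain l h where lh: "vis (0, k, 0) xs = {l..h}" "l \<le> 0" "0 \<le> h" using vis_interval[of "(0, k, 0)" xs] by auto
  define D where "D = ind (fst (snd (runW (0, k, 0) xs)) = 0 \<and> snd (snd (runW (0, k, 0) xs)) = m)"
  define H where "H = nat h"
  define L where "L = nat (- l)"
  have card: "card (vis (0, k, 0) xs) = H + L + 1" unfolding lh H_def L_def using lh by (simp add: nat_add_distrib[symmetric])
  have W: "walkF m (\<lambda>i. 0::'f) (0, k, 0) xs = D * X ^ (H + L + 1)"
    using X card by (simp add: walkF_def D_def zo_def ind_def)
  have G: "ind (gab (Suc a) (Suc b) m (0, k, 0) xs) = D * ind (H \<le> a) * ind (L \<le> b)" for a b
  proof -
    have lh': "l \<le> h" using lh by simp
    have "{l..h} \<subseteq> {- int (Suc b)<..<int (Suc a)} \<longleftrightarrow> - int (Suc b) < l \<and> h < int (Suc a)"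
    proof
      assume sub: "{l..h} \<subseteq> {- int (Suc b)<..<int (Suc a)}"
      have "l \<in> {l..h}" "h \<in> {l..h}" using lh' by auto
      then show "- int (Suc b) < l \<and> h < int (Suc a)" using sub by auto
    qed auto
    moreover have "h < int (Suc a) \<longleftrightarrow> H \<le> a" unfolding H_def by (simp only: nat_le_iff) linarith
    moreover have "- int (Suc b) < l \<longleftrightarrow> L \<le> b" unfolding L_def by (simp only: nat_le_iff) linarith
    ultimately have "vis (0, k, 0) xs \<subseteq> {- int (Suc b)<..<int (Suc a)} \<longleftrightarrow> H \<le> a \<and> L \<le> b"
      unfolding lh by blast
    then show ?thesis by (auto simp: gab_def D_def ind_def)
  qed
  have D0: "0 \<le> D" by (simp add: D_def)
  have X0: "0 \<le> X" "X < 1" using X by auto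
  have pt: "ennreal (X ^ Suc a * X ^ Suc b) * ennreal (ind (gab (Suc a) (Suc b) m (0, k, 0) xs))
      = (ennreal D * ennreal (X ^ Suc a * ind (H \<le> a))) * ennreal (X ^ Suc b * ind (L \<le> b))" for a b
  proof -
    have "ennreal (X ^ Suc a * X ^ Suc b) * ennreal (ind (gab (Suc a) (Suc b) m (0, k, 0) xs))
        = ennreal (X ^ Suc a * X ^ Suc b * (D * ind (H \<le> a) * ind (L \<le> b)))"
      unfolding G using X0 D0 by (simp add: ennreal_mult[symmetric])
    also have "\<dots> = ennreal (D * (X ^ Suc a * ind (H \<le> a)) * (X ^ Suc b * ind (L \<le> b)))"
      by (simp only: mult_ac)
    also have "\<dots> = (ennreal D * ennreal (X ^ Suc a * ind (H \<le> a))) * ennreal (X ^ Suc b * ind (L \<le> b))"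
      using X0 D0 by (simp add: ennreal_mult)
    finally show ?thesis .
  qed
  have "(\<Sum>a. \<Sum>b. ennreal (X ^ Suc a * X ^ Suc b) * ennreal (ind (gab (Suc a) (Suc b) m (0, k, 0) xs)))
      = (\<Sum>a. \<Sum>b. (ennreal D * ennreal (X ^ Suc a * ind (H \<le> a))) * ennreal (X ^ Suc b * ind (L \<le> b)))"
    by (simp only: pt)
  also have "\<dots> = (\<Sum>a. ennreal D * ennreal (X ^ Suc a * ind (H \<le> a)) * ennreal (X ^ Suc L / (1 - X)))"
    by (simp only: ennreal_suminf_cmult tail_ennreal[OF X0])
  also have "\<dots> = (\<Sum>a. ennreal D * ennreal (X ^ Suc a * ind (H \<le> a))) * ennreal (X ^ Suc L / (1 - X))"
    by (rule ennreal_suminf_multc)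
  also have "(\<Sum>a. ennreal D * ennreal (X ^ Suc a * ind (H \<le> a))) = ennreal D * (\<Sum>a. ennreal (X ^ Suc a * ind (H \<le> a)))"
    by (rule ennreal_suminf_cmult)
  also have "(\<Sum>a. ennreal (X ^ Suc a * ind (H \<le> a))) = ennreal (X ^ Suc H / (1 - X))"
    by (rule tail_ennreal[OF X0])
  finally have S0: "(\<Sum>a. \<Sum>b. ennreal (X ^ Suc a * X ^ Suc b) * ennreal (ind (gab (Suc a) (Suc b) m (0, k, 0) xs)))
      = ennreal D * ennreal (X ^ Suc H / (1 - X)) * ennreal (X ^ Suc L / (1 - X))" .
  have tH0: "0 \<le> X ^ Suc H / (1 - X)" using X0 by simp
  have tL0: "0 \<le> X ^ Suc L / (1 - X)" using X0 by simp
  have "ennreal D * ennreal (X ^ Suc H / (1 - X)) * ennreal (X ^ Suc L / (1 - X)) = ennreal (D * (X ^ Suc H / (1 - X)) * (X ^ Suc L / (1 - X)))"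
    by (simp only: ennreal_mult[OF mult_nonneg_nonneg[OF D0 tH0] tL0] ennreal_mult[OF D0 tH0])
  with S0 have S: "(\<Sum>a. \<Sum>b. ennreal (X ^ Suc a * X ^ Suc b) * ennreal (ind (gab (Suc a) (Suc b) m (0, k, 0) xs)))
      = ennreal (D * (X ^ Suc H / (1 - X)) * (X ^ Suc L / (1 - X)))" by simp
  have alg: "u \<noteq> 0 \<Longrightarrow> Y \<noteq> 0 \<Longrightarrow> u^2 / Y * (D * (Y * a / u) * (Y * b / u)) = D * (Y * (a * b))" for u Y a b :: real
    by (simp add: field_simps power2_eq_square)
  have "(1 - X)^2 / X * (D * (X ^ Suc H / (1 - X)) * (X ^ Suc L / (1 - X))) = D * (X * (X ^ H * X ^ L))"
    using alg[of "1 - X" X "X ^ H" "X ^ L"] X by simp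
  also have "\<dots> = D * X ^ (H + L + 1)" by (simp add: power_add)
  finally have alg2: "(1 - X)^2 / X * (D * (X ^ Suc H / (1 - X)) * (X ^ Suc L / (1 - X))) = D * X ^ (H + L + 1)" .
  have K0: "0 \<le> (1 - X)^2 / X" using X0 by simp
  have P0: "0 \<le> D * (X ^ Suc H / (1 - X)) * (X ^ Suc L / (1 - X))" using D0 tH0 tL0 by (intro mult_nonneg_nonneg)
  show ?thesis unfolding S W alg2[symmetric] by (rule ennreal_mult[OF K0 P0])
qed

lemma int_ind: "(\<integral>\<^sup>+\<omega>. ennreal (ind (Q (stake n \<omega>))) \<partial>(lamp_space p :: 'f::finite inn stream measure))
   = emeasure (lamp_space p :: 'f inn stream measure) {\<omega>. Q (stake n \<omega>)}"
proof -
  have "(\<integral>\<^sup>+\<omega>. ennreal (ind (Q (stake n \<omega>))) \<partial>(lamp_space p :: 'f::finite inn stream measure))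
     = (\<integral>\<^sup>+\<omega>. indicator {\<omega>. Q (stake n \<omega>)} \<omega> \<partial>(lamp_space p :: 'f::finite inn stream measure))"
    by (intro nn_integral_cong) (simp add: ind_def indicator_def)
  also have "\<dots> = emeasure (lamp_space p :: 'f inn stream measure) {\<omega>. Q (stake n \<omega>)}"
    by (rule nn_integral_indicator[OF sets_stake])
  finally show ?thesis .
qed

definition Phin :: "nat \<Rightarrow> nat \<Rightarrow> nat \<Rightarrow> 'f::zero inn stream set" where
  "Phin k m n = {\<omega>. fst (snd (runW (0, k, 0) (stake n \<omega>))) = 0 \<and> fst (runL ((\<lambda>i. 0), (0, k, 0)) (stake n \<omega>)) = (\<lambda>i. 0)
       \<and> snd (snd (runW (0, k, 0) (stake n \<omega>))) = m}"

lemma Phi_Un: "Phi k m = (\<Union>n. Phin k m n)"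
  by (auto simp: Phi_def Phin_def)

lemma Phin_incseq: "incseq (Phin k m :: nat \<Rightarrow> 'f::zero inn stream set)"
proof (rule incseq_SucI, rule subsetI)
  fix n and \<omega> :: "'f inn stream" assume a: "\<omega> \<in> Phin k m n"
  then have d: "fst (snd (runW (0, k, 0) (stake n \<omega>))) = 0" by (simp add: Phin_def)
  have e: "runL ((\<lambda>i. 0), (0, k, 0)) (stake (Suc n) \<omega>) = runL ((\<lambda>i. 0), (0, k, 0)) (stake n \<omega>)"
    by (rule Phi_mono_n[OF d])
  have "runW (0, k, 0) (stake (Suc n) \<omega>) = snd (runL ((\<lambda>i. 0::'f), (0, k, 0)) (stake (Suc n) \<omega>))"
    by (simp only: snd_runL snd_conv)
  also have "\<dots> = snd (runL ((\<lambda>i. 0::'f), (0, k, 0)) (stake n \<omega>))" by (simp only: e)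
  also have "\<dots> = runW (0, k, 0) (stake n \<omega>)" by (simp only: snd_runL snd_conv)
  finally have "runW (0, k, 0) (stake (Suc n) \<omega>) = runW (0, k, 0) (stake n \<omega>)" .
  then show "\<omega> \<in> Phin k m (Suc n)" using a e by (simp add: Phin_def)
qed

lemma Phin_int:
  assumes p: "0 \<le> p" "p \<le> 1" and k: "0 < k"
  shows "emeasure (lamp_space p :: 'f::{finite,group_add} inn stream measure) (Phin k m n)
     = (\<integral>\<^sup>+\<omega>. ennreal (walkF m (\<lambda>i. 0::'f) (0, k, 0) (stake n \<omega>)) \<partial>lamp_space p)"
proof -
  have "emeasure (lamp_space p :: 'f inn stream measure) (Phin k m n)
      = (\<integral>\<^sup>+\<omega>. ennreal (lamF m (\<lambda>i. 0::'f) (0, k, 0) (stake n \<omega>)) \<partial>lamp_space p)"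
    unfolding lamF_def Phin_def by (rule int_ind[symmetric])
  also have "\<dots> = (\<integral>\<^sup>+\<omega>. ennreal (walkF m (\<lambda>i. 0::'f) (0, k, 0) (stake n \<omega>)) \<partial>lamp_space p)"
    by (rule P1[OF p]) (use k in simp)
  finally show ?thesis .
qed

lemma Phin_sum:
  assumes p: "0 \<le> p" "p \<le> 1" and k: "0 < k" and F: "2 \<le> CARD('f::{finite,group_add})"
  defines "X \<equiv> 1 / real CARD('f)"
  shows "emeasure (lamp_space p :: 'f inn stream measure) (Phin k m n)
     = ennreal ((1 - X)^2 / X) * (\<Sum>a. \<Sum>b. ennreal (X ^ Suc a * X ^ Suc b) *
          emeasure (lamp_space p :: 'f inn stream measure) {\<omega>. gab (Suc a) (Suc b) m (0, k, 0) (stake n \<omega>)})"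
proof -
  have X: "0 < X" "X < 1" "X = 1 / real CARD('f)" using F by (auto simp: X_def)
  have "emeasure (lamp_space p :: 'f inn stream measure) (Phin k m n)
     = (\<integral>\<^sup>+\<omega>. ennreal (walkF m (\<lambda>i. 0::'f) (0, k, 0) (stake n \<omega>)) \<partial>lamp_space p)"
    by (rule Phin_int[OF p k])
  also have "\<dots> = (\<integral>\<^sup>+\<omega>. ennreal ((1 - X)^2 / X) * (\<Sum>a. \<Sum>b. ennreal (X ^ Suc a * X ^ Suc b) * ennreal (ind (gab (Suc a) (Suc b) m (0, k, 0) (stake n \<omega>))))
          \<partial>(lamp_space p :: 'f inn stream measure))"
    by (rule nn_integral_cong) (rule pw[OF X])
  also have "\<dots> = ennreal ((1 - X)^2 / X) * (\<integral>\<^sup>+\<omega>. (\<Sum>a. \<Sum>b. ennreal (X ^ Suc a * X ^ Suc b) * ennreal (ind (gab (Suc a) (Suc b) m (0, k, 0) (stake n \<omega>))))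
          \<partial>(lamp_space p :: 'f inn stream measure))"
    by (rule nn_integral_cmult) (rule meas_stake[where g="\<lambda>xs. (\<Sum>a. \<Sum>b. ennreal (X ^ Suc a * X ^ Suc b) * ennreal (ind (gab (Suc a) (Suc b) m (0, k, 0) xs)))"], simp)
  also have "(\<integral>\<^sup>+\<omega>. (\<Sum>a. \<Sum>b. ennreal (X ^ Suc a * X ^ Suc b) * ennreal (ind (gab (Suc a) (Suc b) m (0, k, 0) (stake n \<omega>))))
          \<partial>(lamp_space p :: 'f inn stream measure))
      = (\<Sum>a. \<integral>\<^sup>+\<omega>. (\<Sum>b. ennreal (X ^ Suc a * X ^ Suc b) * ennreal (ind (gab (Suc a) (Suc b) m (0, k, 0) (stake n \<omega>))))
          \<partial>(lamp_space p :: 'f inn stream measure))"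
    by (rule nn_integral_suminf) (rule meas_stake[where g="\<lambda>xs. (\<Sum>b. ennreal (X ^ Suc _ * X ^ Suc b) * ennreal (ind (gab (Suc _) (Suc b) m (0, k, 0) xs)))"], simp)
  also have "\<dots> = (\<Sum>a. \<Sum>b. \<integral>\<^sup>+\<omega>. ennreal (X ^ Suc a * X ^ Suc b) * ennreal (ind (gab (Suc a) (Suc b) m (0, k, 0) (stake n \<omega>)))
          \<partial>(lamp_space p :: 'f inn stream measure))"
    by (intro suminf_cong nn_integral_suminf) (rule meas_stake[where g="\<lambda>xs. ennreal (X ^ Suc _ * X ^ Suc _) * ennreal (ind (gab (Suc _) (Suc _) m (0, k, 0) xs))"], simp)
  also have "\<dots> = (\<Sum>a. \<Sum>b. ennreal (X ^ Suc a * X ^ Suc b) *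
          emeasure (lamp_space p :: 'f inn stream measure) {\<omega>. gab (Suc a) (Suc b) m (0, k, 0) (stake n \<omega>)})"
  proof (intro suminf_cong)
    fix a b
    show "(\<integral>\<^sup>+\<omega>. ennreal (X ^ Suc a * X ^ Suc b) * ennreal (ind (gab (Suc a) (Suc b) m (0, k, 0) (stake n \<omega>))) \<partial>(lamp_space p :: 'f inn stream measure))
      = ennreal (X ^ Suc a * X ^ Suc b) * emeasure (lamp_space p :: 'f inn stream measure) {\<omega>. gab (Suc a) (Suc b) m (0, k, 0) (stake n \<omega>)}"
      by (subst nn_integral_cmult) (rule meas_stake, simp, rule arg_cong[OF int_ind])
  qed
  finally show ?thesis .
qed

lemma e_incseq: "incseq (\<lambda>n. emeasure (lamp_space p :: 'f::finite inn stream measure) {\<omega>. gab A B m w (stake n \<omega>)})"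
proof (rule incseq_SucI)
  fix n
  show "emeasure (lamp_space p :: 'f::finite inn stream measure) {\<omega>. gab A B m w (stake n \<omega>)}
      \<le> emeasure (lamp_space p :: 'f::finite inn stream measure) {\<omega>. gab A B m w (stake (Suc n) \<omega>)}"
  proof (rule emeasure_mono)
    show "{\<omega>. gab A B m w (stake n \<omega>)} \<subseteq> {\<omega>. gab A B m w (stake (Suc n) \<omega>)}" using gab_mono_n by blast
    show "{\<omega>. gab A B m w (stake (Suc n) \<omega>)} \<in> sets (lamp_space p :: 'f::finite inn stream measure)" by (rule sets_stake)
  qed
qed

lemma Eab_SUP: "(SUP n. emeasure (lamp_space p :: 'f::finite inn stream measure) {\<omega>. gab A B m w (stake n \<omega>)})
   = emeasure (lamp_space p :: 'f::finite inn stream measure) (Eab A B m w)"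
proof -
  have "(SUP n. emeasure (lamp_space p :: 'f::finite inn stream measure) {\<omega>. gab A B m w (stake n \<omega>)})
      = emeasure (lamp_space p :: 'f::finite inn stream measure) (\<Union>n. {\<omega>. gab A B m w (stake n \<omega>)})"
  proof (rule SUP_emeasure_incseq)
    show "range (\<lambda>n. {\<omega>. gab A B m w (stake n \<omega>)}) \<subseteq> sets (lamp_space p :: 'f::finite inn stream measure)"
      using sets_stake by blast
    show "incseq (\<lambda>n. {\<omega>. gab A B m w (stake (n::nat) \<omega>)} :: 'f inn stream set)"
      by (rule incseq_SucI) (use gab_mono_n in blast)
  qed
  also have "(\<Union>n. {\<omega>. gab A B m w (stake n \<omega>)}) = Eab A B m w" by (auto simp: Eab_def)
  finally show ?thesis .
qed

lemma Phi_emeasure: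
  assumes p: "1/2 < p" "p < 1" and k: "0 < k" and F: "2 \<le> CARD('f::{finite,group_add})"
  defines "X \<equiv> 1 / real CARD('f)"
  shows "emeasure (lamp_space p :: 'f inn stream measure) (Phi k m)
     = ennreal ((1 - X)^2 / X) * (\<Sum>a. \<Sum>b. ennreal (X ^ Suc a * X ^ Suc b) *
          ennreal (fE TYPE('f) p (Suc a) (Suc b) m (0, k, 0)))"
proof -
  have p': "0 \<le> p" "p \<le> 1" using p by auto
  define e where "e = (\<lambda>n a b. emeasure (lamp_space p :: 'f inn stream measure) {\<omega>. gab (Suc a) (Suc b) m (0, k, 0) (stake n \<omega>)})"
  define c where "c = (\<lambda>a b. ennreal (X ^ Suc a * X ^ Suc b))"
  have inc_e: "incseq (\<lambda>n. e n a b)" for a b unfolding e_def by (rule e_incseq)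
  have inc_ce: "incseq (\<lambda>n. c a b * e n a b)" for a b
    using inc_e[of a b] by (auto simp: incseq_def intro: mult_left_mono)
  have inc_s: "incseq (\<lambda>n. \<Sum>b. c a b * e n a b)" for a
    using inc_ce by (auto simp: incseq_def intro!: suminf_le)
  have "emeasure (lamp_space p :: 'f inn stream measure) (Phi k m) = (SUP n. emeasure (lamp_space p :: 'f inn stream measure) (Phin k m n))"
  proof -
    have "\<And>n. Phin k m n \<in> sets (lamp_space p :: 'f inn stream measure)" unfolding Phin_def by (rule sets_stake)
    then have "range (Phin k m) \<subseteq> sets (lamp_space p :: 'f inn stream measure)" by auto
    then show ?thesis unfolding Phi_Un by (rule SUP_emeasure_incseq[symmetric, OF _ Phin_incseq])
  qed
  also have "\<dots> = (SUP n. ennreal ((1 - X)^2 / X) * (\<Sum>a. \<Sum>b. c a b * e n a b))"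
    unfolding c_def e_def X_def by (intro SUP_cong refl Phin_sum[OF p' k F])
  also have "\<dots> = ennreal ((1 - X)^2 / X) * (SUP n. (\<Sum>a. \<Sum>b. c a b * e n a b))"
    by (rule SUP_mult_left_ennreal[symmetric])
  also have "(SUP n. (\<Sum>a. \<Sum>b. c a b * e n a b)) = (\<Sum>a. SUP n. \<Sum>b. c a b * e n a b)"
    by (rule ennreal_suminf_SUP_eq[symmetric]) (rule inc_s)
  also have "\<dots> = (\<Sum>a. \<Sum>b. SUP n. c a b * e n a b)"
    by (intro suminf_cong ennreal_suminf_SUP_eq[symmetric] inc_ce)
  also have "\<dots> = (\<Sum>a. \<Sum>b. c a b * (SUP n. e n a b))"
    by (simp only: SUP_mult_left_ennreal)
  also have "\<dots> = (\<Sum>a. \<Sum>b. c a b * ennreal (fE TYPE('f) p (Suc a) (Suc b) m (0, k, 0)))"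
  proof (intro suminf_cong arg_cong2[where f="(*)"] refl)
    fix a b
    interpret S: prob_space "lamp_space p :: 'f inn stream measure" by (rule prob_space_lamp)
    show "(SUP n. e n a b) = ennreal (fE TYPE('f) p (Suc a) (Suc b) m (0, k, 0))"
      unfolding e_def Eab_SUP fE_def by (simp add: S.emeasure_eq_measure)
  qed
  finally show ?thesis unfolding c_def .
qed

lemma G01:
  assumes "1 < lam" "0 < n"
  shows "0 \<le> Gf lam n" "Gf lam n \<le> 1"
proof -
  have "lam ^ 1 \<le> lam ^ n" using assms by (intro power_increasing) auto
  then have "lam - 1 \<le> lam ^ n - 1" by simp
  moreover have "0 < lam - 1" using assms by simp
  ultimately have "(lam - 1) / (lam ^ n - 1) \<le> 1" "0 \<le> (lam - 1) / (lam ^ n - 1)" by auto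
  then show "0 \<le> Gf lam n" "Gf lam n \<le> 1" by (auto simp: Gf_def)
qed

lemma summable_u:
  fixes X lam :: real
  assumes X: "0 \<le> X" "X < 1" and lam: "1 < lam"
  shows "summable (\<lambda>a. X ^ Suc a * Gf lam (Suc a) ^ j)"
proof (rule summable_comparison_test')
  show "summable (\<lambda>a. X * X ^ a)" by (rule summable_mult) (rule summable_geometric, use X in simp)
  fix a :: nat
  have "0 \<le> Gf lam (Suc a)" "Gf lam (Suc a) \<le> 1" using G01[OF lam] by auto
  then have "Gf lam (Suc a) ^ j \<le> 1" "0 \<le> Gf lam (Suc a) ^ j" by (auto intro: power_le_one)
  then show "norm (X ^ Suc a * Gf lam (Suc a) ^ j) \<le> X * X ^ a"
    using X by (auto simp: abs_mult intro!: mult_left_le)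
qed

lemma double_sum:
  fixes u v :: "nat \<Rightarrow> real"
  assumes "\<And>a. 0 \<le> u a" "\<And>b. 0 \<le> v b" "summable u" "summable v" "0 \<le> c"
  shows "(\<Sum>a. \<Sum>b. ennreal (c * u a * v b)) = ennreal (c * suminf u * suminf v)"
proof -
  have "(\<Sum>a. \<Sum>b. ennreal (c * u a * v b)) = (\<Sum>a. \<Sum>b. ennreal (c * u a) * ennreal (v b))"
    using assms by (simp add: ennreal_mult)
  also have "\<dots> = (\<Sum>a. ennreal (c * u a) * ennreal (suminf v))"
    using assms by (simp only: ennreal_suminf_cmult suminf_ennreal2)
  also have "\<dots> = (\<Sum>a. ennreal (c * u a)) * ennreal (suminf v)"
    by (rule ennreal_suminf_multc)
  also have "(\<Sum>a. ennreal (c * u a)) = ennreal (\<Sum>a. c * u a)"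
    using assms by (intro suminf_ennreal2) (auto intro: summable_mult)
  also have "(\<Sum>a. c * u a) = c * suminf u" using assms(3) by (rule suminf_mult)
  finally show ?thesis using assms by (simp add: ennreal_mult suminf_nonneg)
qed

lemma term_eq:
  fixes X Ga Gb :: real
  assumes "m \<le> k"
  shows "X ^ Suc a * X ^ Suc b * (real (k choose m) * (Ga / 2) ^ m * (Gb / 2) ^ (k - m))
     = real (k choose m) / 2 ^ k * (X ^ Suc a * Ga ^ m) * (X ^ Suc b * Gb ^ (k - m))"
proof -
  have "(2::real) ^ k = 2 ^ m * 2 ^ (k - m)" using assms by (simp add: power_add[symmetric])
  then show ?thesis by (simp add: power_divide field_simps)
qed

lemma Phi_measure:
  assumes p: "1/2 < p" "p < 1" and k: "0 < k" and F: "2 \<le> CARD('f::{finite,group_add})" and mk: "m \<le> k"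
  defines "X \<equiv> 1 / real CARD('f)"
  defines "lam \<equiv> p / (1 - p)"
  shows "measure (lamp_space p :: 'f inn stream measure) (Phi k m)
     = (1 - X)^2 / X * (real (k choose m) / 2 ^ k) * (\<Sum>a. X ^ Suc a * Gf lam (Suc a) ^ m) * (\<Sum>b. X ^ Suc b * Gf lam (Suc b) ^ (k - m))"
proof -
  interpret S: prob_space "lamp_space p :: 'f inn stream measure" by (rule prob_space_lamp)
  have X: "0 < X" "X < 1" using F by (auto simp: X_def)
  have lam1: "1 < lam" using p by (simp add: lam_def field_simps)
  define u where "u = (\<lambda>a. X ^ Suc a * Gf lam (Suc a) ^ m)"
  define v where "v = (\<lambda>b. X ^ Suc b * Gf lam (Suc b) ^ (k - m))"
  define cc where "cc = real (k choose m) / 2 ^ k"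
  have G0: "\<And>a. 0 \<le> Gf lam (Suc a)" using G01[OF lam1] by auto
  have u0: "\<And>a. 0 \<le> u a" unfolding u_def using X G0 by simp
  have v0: "\<And>b. 0 \<le> v b" unfolding v_def using X G0 by simp
  have su: "summable u" unfolding u_def using X lam1 by (intro summable_u) auto
  have sv: "summable v" unfolding v_def using X lam1 by (intro summable_u) auto
  have cc0: "0 \<le> cc" by (simp add: cc_def)
  have K0: "0 \<le> (1 - X)^2 / X" using X by simp
  have fe: "fE TYPE('f) p (Suc a) (Suc b) m (0, k, 0) = real (k choose m) * (Gf lam (Suc a) / 2) ^ m * (Gf lam (Suc b) / 2) ^ (k - m)" for a b
    unfolding lam_def by (rule fE_k[OF p]) auto
  have pt: "ennreal (X ^ Suc a * X ^ Suc b) * ennreal (fE TYPE('f) p (Suc a) (Suc b) m (0, k, 0)) = ennreal (cc * u a * v b)" for a b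
  proof -
    have "0 \<le> X ^ Suc a * X ^ Suc b" using X by simp
    moreover have "0 \<le> real (k choose m) * (Gf lam (Suc a) / 2) ^ m * (Gf lam (Suc b) / 2) ^ (k - m)" using G0 by simp
    ultimately have "ennreal (X ^ Suc a * X ^ Suc b) * ennreal (fE TYPE('f) p (Suc a) (Suc b) m (0, k, 0))
        = ennreal (X ^ Suc a * X ^ Suc b * (real (k choose m) * (Gf lam (Suc a) / 2) ^ m * (Gf lam (Suc b) / 2) ^ (k - m)))"
      unfolding fe by (simp add: ennreal_mult)
    also have "\<dots> = ennreal (cc * u a * v b)" unfolding term_eq[OF mk] cc_def u_def v_def by simp
    finally show ?thesis .
  qed
  have "0 \<le> suminf u" "0 \<le> suminf v" using u0 v0 su sv by (auto intro: suminf_nonneg)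
  then have P0: "0 \<le> cc * suminf u * suminf v" using cc0 by simp
  have R0: "0 \<le> (1 - X)^2 / X * (cc * suminf u * suminf v)" by (rule mult_nonneg_nonneg[OF K0 P0])
  have "ennreal (measure (lamp_space p :: 'f inn stream measure) (Phi k m)) = emeasure (lamp_space p :: 'f inn stream measure) (Phi k m)"
    by (simp add: S.emeasure_eq_measure)
  also have "\<dots> = ennreal ((1 - X)^2 / X) * (\<Sum>a. \<Sum>b. ennreal (cc * u a * v b))"
    unfolding Phi_emeasure[OF p k F] X_def[symmetric] pt ..
  also have "\<dots> = ennreal ((1 - X)^2 / X) * ennreal (cc * suminf u * suminf v)"
    by (simp only: double_sum[OF u0 v0 su sv cc0])
  also have "\<dots> = ennreal ((1 - X)^2 / X * (cc * suminf u * suminf v))"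
    by (rule ennreal_mult[OF K0 P0, symmetric])
  finally have "measure (lamp_space p :: 'f inn stream measure) (Phi k m) = (1 - X)^2 / X * (cc * suminf u * suminf v)"
    using ennreal_inj[OF measure_nonneg R0] by blast
  then show ?thesis by (simp add: u_def v_def cc_def mult_ac)
qed

theorem proposition2p4:
  fixes p lam :: real and k m :: nat
    and F_type :: "'f::{group_add, finite} itself"
  assumes "CARD('f) \<ge> 2"
    and "1/2 < p" and "p < 1"
    and "lam = p / (1 - p)"
    and "1 \<le> k" and "m \<le> k"
  shows "\<P>(\<omega> in (lamp_space p :: ((bool \<times> bool) \<times> ('f \<times> 'f)) stream measure).
            lstate \<omega> (rho \<omega> k) = ((\<lambda>i. 0), 0) \<bar> Nplus \<omega> k = m)
         = (real CARD('f) - 1)^2 / real CARD('f)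
           * (\<Sum>a. (1 / real CARD('f)) ^ (Suc a) * (1 - (lam - 1) / (lam ^ (Suc a) - 1)) ^ m)
           * (\<Sum>b. (1 / real CARD('f)) ^ (Suc b) * (1 - (lam - 1) / (lam ^ (Suc b) - 1)) ^ (k - m))"
proof -
  have p: "1/2 < p" "p < 1" using assms by auto
  have k: "0 < k" using assms by simp
  define X where "X = 1 / real CARD('f)"
  define Su where "Su = (\<Sum>a. X ^ Suc a * Gf lam (Suc a) ^ m)"
  define Sv where "Sv = (\<Sum>b. X ^ Suc b * Gf lam (Suc b) ^ (k - m))"
  have C0: "real (k choose m) / 2 ^ k \<noteq> 0" using assms by simp
  have "cond_prob (lamp_space p :: 'f inn stream measure) (\<lambda>\<omega>. lstate \<omega> (rho \<omega> k) = ((\<lambda>i. 0), 0)) (\<lambda>\<omega>. Nplus \<omega> k = m)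
      = measure (lamp_space p :: 'f inn stream measure) (Phi k m) / (real (k choose m) / 2 ^ k)"
    unfolding cond_prob_def EA_prob[OF p] EN_prob[OF p assms(6)] ..
  also have "\<dots> = (1 - X)^2 / X * Su * Sv"
    unfolding Phi_measure[OF p k assms(1) assms(6)] X_def[symmetric] Su_def Sv_def assms(4)[symmetric]
    using C0 by (simp add: field_simps)
  also have "(1 - X)^2 / X = (real CARD('f) - 1)^2 / real CARD('f)"
    unfolding X_def using assms(1) by (simp add: field_simps power2_eq_square)
  finally show ?thesis unfolding Su_def Sv_def X_def Gf_def .
qed


end
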